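(* Let $\mathbb{L}$ be a complex $4$-dimensional nilpotent mono Leibniz algebra. Then $\mathbb{L}$ is a binary Leibniz algebra, or $\mathbb{L}$ is isomorphic to one of the following algebras, each given on a basis $e_1,\dots,e_4$ (all products of basis elements not listed are zero; $\alpha\in\mathbb{C}$ unless restricted): \begin{itemize} \item $\mathbb{M}_{01}$: $e_1e_1=e_2,\ e_2e_3=e_4$; \item $\mathbb{M}_{02}$: $e_1e_1=e_2,\ e_2e_3=e_4,\ e_3e_1=e_4$; \item $\mathbb{M}_{03}^{\alpha}$: $e_1e_2=e_3,\ e_1e_3=\alpha e_4,\ e_2e_1=-e_3,\ e_3e_1=(1-\alpha)e_4$; \item $\mathbb{M}_{04}^{\alpha}$: $e_1e_2=e_3,\ e_1e_3=\alpha e_4,\ e_2e_1=-e_3,\ e_2e_2=e_4,\ e_3e_1=(1-\alpha)e_4$; \item $\mathbb{M}_{05}$: $e_1e_2=e_3,\ e_2e_1=-e_3,\ e_2e_3=e_4,\ e_3e_1=e_4,\ e_3e_2=-e_4$; \item $\mathbb{M}_{06}$: $e_1e_2=e_3,\ e_2e_1=-e_3,\ e_2e_2=e_4,\ e_2e_3=e_4,\ e_3e_1=e_4,\ e_3e_2=-e_4$; \item $\mathbb{M}_{07}$: $e_1e_2=e_3,\ e_2e_1=-e_3,\ e_3e_3=e_4$; \item $\mathbb{M}_{08}$: $e_1e_2=e_3+e_4,\ e_2e_1=-e_3,\ e_3e_3=e_4$; \item $\mathbb{M}_{09}$: $e_1e_1=e_4,\ e_1e_2=e_3,\ e_2e_1=-e_3,\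 e_3e_3=e_4$; \item $\mathbb{M}_{10}^{\alpha}$: $e_1e_1=\alpha e_4,\ e_1e_2=e_3,\ e_1e_3=e_4,\ e_2e_1=-e_3,\ e_3e_1=-e_4,\ e_3e_3=e_4$; \item $\mathbb{M}_{11}$: $e_1e_2=e_3+e_4,\ e_1e_3=e_4,\ e_2e_1=-e_3,\ e_3e_1=-e_4,\ e_3e_3=e_4$; \item $\mathbb{M}_{12}^{\alpha}$: $e_1e_1=\alpha e_4,\ e_1e_2=e_3,\ e_1e_3=e_4,\ e_2e_1=-e_3,\ e_2e_2=e_4,\ e_3e_1=-e_4,\ e_3e_3=e_4$; \item $\mathbb{M}_{13}^{\alpha}$: $e_1e_1=e_3,\ e_1e_2=e_3,\ e_2e_2=\alpha e_3,\ e_3e_2=e_4$; \item $\mathbb{M}_{14}^{\alpha}$: $e_1e_1=e_3,\ e_1e_2=e_3,\ e_2e_1=e_4,\ e_2e_2=\alpha e_3,\ e_3e_2=e_4$; \item $\mathbb{M}_{15}^{\alpha}$: $e_1e_1=e_3,\ e_1e_2=e_3,\ e_2e_2=\alpha e_3,\ e_3e_1=e_4,\ e_3e_2=\tfrac12(1-\sqrt{1-4\alpha})e_4$; \item $\mathbb{M}_{16}^{\alpha}$: $e_1e_1=e_3,\ e_1e_2=e_3,\ e_2e_2=\alpha e_3+e_4,\ e_3e_1=e_4,\ e_3e_2=\tfrac12(1-\sqrt{1-4\alpha})e_4$; \item $\mathbb{M}_{17}^{\alpha}$, $\alpha\neq0$: $e_1e_1=e_3,\ e_1e_2=e_3,\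 e_2e_2=\alpha e_3,\ e_3e_1=e_4,\ e_3e_2=\tfrac12(1+\sqrt{1-4\alpha})e_4$; \item $\mathbb{M}_{18}^{\alpha}$, $\alpha\neq0$: $e_1e_1=e_3,\ e_1e_2=e_3,\ e_2e_2=\alpha e_3+e_4,\ e_3e_1=e_4,\ e_3e_2=\tfrac12(1+\sqrt{1-4\alpha})e_4$; \item $\mathbb{M}_{19}$: $e_1e_1=e_3,\ e_2e_2=e_3,\ e_3e_1=e_4$; \item $\mathbb{M}_{20}$: $e_1e_1=e_3,\ e_1e_2=e_4,\ e_2e_2=e_3,\ e_3e_1=e_4$; \item $\mathbb{M}_{21}$: $e_1e_1=e_3,\ e_2e_2=e_3,\ e_3e_1=e_4,\ e_3e_2=ie_4$; \item $\mathbb{M}_{22}$: $e_1e_1=e_3,\ e_1e_2=e_4,\ e_2e_2=e_3,\ e_3e_1=e_4,\ e_3e_2=ie_4$. \end{itemize}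
   Context: All algebras are over $\mathbb{C}$ and not necessarily associative; $i=\sqrt{-1}$ and $\sqrt{1-4\alpha}$ denotes a fixed square root of $1-4\alpha$. An algebra is a Leibniz algebra if it satisfies $(xy)z=(xz)y+x(yz)$ for all $x,y,z$. An algebra is a binary Leibniz algebra if every subalgebra generated by two elements is a Leibniz algebra, and a mono Leibniz algebra if every subalgebra generated by one element is a Leibniz algebra. An algebra $A$ is nilpotent if there is $n$ such that every product of $n$ elements of $A$, with any arrangement of brackets, is zero. *)

theory Defs
  imports "HOL-Analysis.Analysis"
begin

text \<open>A 4-dimensional complex algebra is modelled, after choosing a basis, as the
complex vector space complex^4 with a complex-bilinear multiplication.\<close>

type_synonym vec4 = "complex ^ 4"
type_synonym alg4 = "vec4 \<Rightarrow> vec4 \<Rightarrow> vec4"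

definition clin :: "(vec4 \<Rightarrow> vec4) \<Rightarrow> bool" where
  "clin f \<longleftrightarrow> Vector_Spaces.linear ((*s)) ((*s)) f"

definition cbilinear :: "alg4 \<Rightarrow> bool" where
  "cbilinear m \<longleftrightarrow> (\<forall>y. clin (\<lambda>x. m x y)) \<and> (\<forall>x. clin (\<lambda>y. m x y))"

definition gen_subalg :: "alg4 \<Rightarrow> vec4 set \<Rightarrow> vec4 set" where
  "gen_subalg m S = \<Inter>{B. S \<subseteq> B \<and> module.subspace ((*s)) B \<and> (\<forall>x\<in>B. \<forall>y\<in>B. m x y \<in> B)}"

definition leibniz_on :: "alg4 \<Rightarrow> vec4 set \<Rightarrow> bool" where
  "leibniz_on m B \<longleftrightarrow> (\<forall>x\<in>B. \<forall>y\<in>B. \<forall>z\<in>B. m (m x y) z = m (m x z) y + m x (m y z))"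

definition mono_leibniz :: "alg4 \<Rightarrow> bool" where
  "mono_leibniz m \<longleftrightarrow> (\<forall>x. leibniz_on m (gen_subalg m {x}))"

definition binary_leibniz :: "alg4 \<Rightarrow> bool" where
  "binary_leibniz m \<longleftrightarrow> (\<forall>x y. leibniz_on m (gen_subalg m {x, y}))"

inductive is_prod :: "alg4 \<Rightarrow> nat \<Rightarrow> vec4 \<Rightarrow> bool" for m where
  single: "is_prod m 1 x"
| mult: "is_prod m i a \<Longrightarrow> is_prod m j b \<Longrightarrow> is_prod m (i + j) (m a b)"

definition nilpotent_alg :: "alg4 \<Rightarrow> bool" where
  "nilpotent_alg m \<longleftrightarrow> (\<exists>n>0. \<forall>p. is_prod m n p \<longrightarrow> p = 0)"

definition isomorphic_alg :: "alg4 \<Rightarrow> alg4 \<Rightarrow> bool" where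
  "isomorphic_alg m1 m2 \<longleftrightarrow> (\<exists>f. clin f \<and> bij f \<and> (\<forall>x y. f (m1 x y) = m2 (f x) (f y)))"

text \<open>Standard basis e_1,...,e_4 (indices 1..4 mapped injectively into the index type 4).\<close>
definition e :: "nat \<Rightarrow> vec4" where
  "e k = axis (of_nat k :: 4) 1"

definition tbl :: "(nat \<Rightarrow> nat \<Rightarrow> vec4) \<Rightarrow> alg4" where
  "tbl t x y = (\<Sum>i\<in>{1..4}. \<Sum>j\<in>{1..4}. (x $ of_nat i * y $ of_nat j) *s t i j)"

definition M01 :: alg4 where "M01 = tbl (\<lambda>i j.
  if (i,j) = (1,1) then e 2 else if (i,j) = (2,3) then e 4 else 0)"
definition M02 :: alg4 where "M02 = tbl (\<lambda>i j.
  if (i,j) = (1,1) then e 2 else if (i,j) = (2,3) then e 4 else if (i,j) = (3,1) then e 4 else 0)"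
definition M03 :: "complex \<Rightarrow> alg4" where "M03 \<alpha> = tbl (\<lambda>i j.
  if (i,j) = (1,2) then e 3 else if (i,j) = (1,3) then \<alpha> *s e 4
  else if (i,j) = (2,1) then - e 3 else if (i,j) = (3,1) then (1 - \<alpha>) *s e 4 else 0)"
definition M04 :: "complex \<Rightarrow> alg4" where "M04 \<alpha> = tbl (\<lambda>i j.
  if (i,j) = (1,2) then e 3 else if (i,j) = (1,3) then \<alpha> *s e 4
  else if (i,j) = (2,1) then - e 3 else if (i,j) = (2,2) then e 4
  else if (i,j) = (3,1) then (1 - \<alpha>) *s e 4 else 0)"
definition M05 :: alg4 where "M05 = tbl (\<lambda>i j.
  if (i,j) = (1,2) then e 3 else if (i,j) = (2,1) then - e 3 else if (i,j) = (2,3) then e 4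
  else if (i,j) = (3,1) then e 4 else if (i,j) = (3,2) then - e 4 else 0)"
definition M06 :: alg4 where "M06 = tbl (\<lambda>i j.
  if (i,j) = (1,2) then e 3 else if (i,j) = (2,1) then - e 3 else if (i,j) = (2,2) then e 4
  else if (i,j) = (2,3) then e 4
  else if (i,j) = (3,1) then e 4 else if (i,j) = (3,2) then - e 4 else 0)"
definition M07 :: alg4 where "M07 = tbl (\<lambda>i j.
  if (i,j) = (1,2) then e 3 else if (i,j) = (2,1) then - e 3 else if (i,j) = (3,3) then e 4 else 0)"
definition M08 :: alg4 where "M08 = tbl (\<lambda>i j.
  if (i,j) = (1,2) then e 3 + e 4 else if (i,j) = (2,1) then - e 3
  else if (i,j) = (3,3) then e 4 else 0)"
definition M09 :: alg4 where "M09 = tbl (\<lambda>i j.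
  if (i,j) = (1,1) then e 4 else if (i,j) = (1,2) then e 3 else if (i,j) = (2,1) then - e 3
  else if (i,j) = (3,3) then e 4 else 0)"
definition M10 :: "complex \<Rightarrow> alg4" where "M10 \<alpha> = tbl (\<lambda>i j.
  if (i,j) = (1,1) then \<alpha> *s e 4 else if (i,j) = (1,2) then e 3 else if (i,j) = (1,3) then e 4
  else if (i,j) = (2,1) then - e 3 else if (i,j) = (3,1) then - e 4
  else if (i,j) = (3,3) then e 4 else 0)"
definition M11 :: alg4 where "M11 = tbl (\<lambda>i j.
  if (i,j) = (1,2) then e 3 + e 4 else if (i,j) = (1,3) then e 4
  else if (i,j) = (2,1) then - e 3 else if (i,j) = (3,1) then - e 4
  else if (i,j) = (3,3) then e 4 else 0)"
definition M12 :: "complex \<Rightarrow> alg4" where "M12 \<alpha> = tbl (\<lambda>i j.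
  if (i,j) = (1,1) then \<alpha> *s e 4 else if (i,j) = (1,2) then e 3 else if (i,j) = (1,3) then e 4
  else if (i,j) = (2,1) then - e 3 else if (i,j) = (2,2) then e 4
  else if (i,j) = (3,1) then - e 4 else if (i,j) = (3,3) then e 4 else 0)"
definition M13 :: "complex \<Rightarrow> alg4" where "M13 \<alpha> = tbl (\<lambda>i j.
  if (i,j) = (1,1) then e 3 else if (i,j) = (1,2) then e 3 else if (i,j) = (2,2) then \<alpha> *s e 3
  else if (i,j) = (3,2) then e 4 else 0)"
definition M14 :: "complex \<Rightarrow> alg4" where "M14 \<alpha> = tbl (\<lambda>i j.
  if (i,j) = (1,1) then e 3 else if (i,j) = (1,2) then e 3 else if (i,j) = (2,1) then e 4
  else if (i,j) = (2,2) then \<alpha> *s e 3 else if (i,j) = (3,2) then e 4 else 0)"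
definition M15 :: "complex \<Rightarrow> alg4" where "M15 \<alpha> = tbl (\<lambda>i j.
  if (i,j) = (1,1) then e 3 else if (i,j) = (1,2) then e 3 else if (i,j) = (2,2) then \<alpha> *s e 3
  else if (i,j) = (3,1) then e 4
  else if (i,j) = (3,2) then ((1 - csqrt (1 - 4 * \<alpha>)) / 2) *s e 4 else 0)"
definition M16 :: "complex \<Rightarrow> alg4" where "M16 \<alpha> = tbl (\<lambda>i j.
  if (i,j) = (1,1) then e 3 else if (i,j) = (1,2) then e 3 else if (i,j) = (2,2) then \<alpha> *s e 3 + e 4
  else if (i,j) = (3,1) then e 4
  else if (i,j) = (3,2) then ((1 - csqrt (1 - 4 * \<alpha>)) / 2) *s e 4 else 0)"
definition M17 :: "complex \<Rightarrow> alg4" where "M17 \<alpha> = tbl (\<lambda>i j.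
  if (i,j) = (1,1) then e 3 else if (i,j) = (1,2) then e 3 else if (i,j) = (2,2) then \<alpha> *s e 3
  else if (i,j) = (3,1) then e 4
  else if (i,j) = (3,2) then ((1 + csqrt (1 - 4 * \<alpha>)) / 2) *s e 4 else 0)"
definition M18 :: "complex \<Rightarrow> alg4" where "M18 \<alpha> = tbl (\<lambda>i j.
  if (i,j) = (1,1) then e 3 else if (i,j) = (1,2) then e 3 else if (i,j) = (2,2) then \<alpha> *s e 3 + e 4
  else if (i,j) = (3,1) then e 4
  else if (i,j) = (3,2) then ((1 + csqrt (1 - 4 * \<alpha>)) / 2) *s e 4 else 0)"
definition M19 :: alg4 where "M19 = tbl (\<lambda>i j.
  if (i,j) = (1,1) then e 3 else if (i,j) = (2,2) then e 3 else if (i,j) = (3,1) then e 4 else 0)"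
definition M20 :: alg4 where "M20 = tbl (\<lambda>i j.
  if (i,j) = (1,1) then e 3 else if (i,j) = (1,2) then e 4 else if (i,j) = (2,2) then e 3
  else if (i,j) = (3,1) then e 4 else 0)"
definition M21 :: alg4 where "M21 = tbl (\<lambda>i j.
  if (i,j) = (1,1) then e 3 else if (i,j) = (2,2) then e 3 else if (i,j) = (3,1) then e 4
  else if (i,j) = (3,2) then \<i> *s e 4 else 0)"
definition M22 :: alg4 where "M22 = tbl (\<lambda>i j.
  if (i,j) = (1,1) then e 3 else if (i,j) = (1,2) then e 4 else if (i,j) = (2,2) then e 3
  else if (i,j) = (3,1) then e 4 else if (i,j) = (3,2) then \<i> *s e 4 else 0)"

end

theory Submission
  imports Defs
begin

definition v4 :: "complex \<Rightarrow> complex \<Rightarrow> complex \<Rightarrow> complex \<Rightarrow> vec4" where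
  "v4 a b c d = (\<chi> i. if i = 1 then a else if i = 2 then b else if i = 3 then c else d)"
lemma v4_nth[simp]: "v4 a b c d $ 1 = a" "v4 a b c d $ 2 = b" "v4 a b c d $ 3 = c" "v4 a b c d $ 4 = d"
  by (simp_all add: v4_def)
lemma vec4_eq: "(x::vec4) = y \<longleftrightarrow> x$1 = y$1 \<and> x$2 = y$2 \<and> x$3 = y$3 \<and> x$4 = y$4"
  by (auto simp: vec_eq_iff forall_4)

datatype prm = Prm (pa11: complex) (pa12: complex) (pa21: complex) (pa22: complex)
  (pb11: complex) (pb12: complex) (pb21: complex) (pb22: complex)
  (pg1: complex) (pg2: complex) (pd1: complex) (pd2: complex) (pf: complex)

fun Sh :: "prm \<Rightarrow> alg4" where
  "Sh (Prm a11 a12 a21 a22 b11 b12 b21 b22 g1 g2 d1 d2 f) x y =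
     v4 0 0 (a11*x$1*y$1 + a12*x$1*y$2 + a21*x$2*y$1 + a22*x$2*y$2)
      (b11*x$1*y$1 + b12*x$1*y$2 + b21*x$2*y$1 + b22*x$2*y$2
       + g1*x$1*y$3 + g2*x$2*y$3 + d1*x$3*y$1 + d2*x$3*y$2 + f*x$3*y$3)"

definition Tm :: "complex \<Rightarrow> complex \<Rightarrow> complex \<Rightarrow> complex \<Rightarrow> complex \<Rightarrow> complex \<Rightarrow> complex \<Rightarrow> complex \<Rightarrow> complex \<Rightarrow> vec4 \<Rightarrow> vec4" where
  "Tm p11 p12 p21 p22 l1 l2 c k h a = v4 (p11*a$1 + p12*a$2) (p21*a$1 + p22*a$2)
     (l1*a$1 + l2*a$2 + c*a$3) (k*a$3 + h*a$4)"

fun tr :: "prm \<Rightarrow> complex \<Rightarrow> complex \<Rightarrow> complex \<Rightarrow> complex \<Rightarrow> complex \<Rightarrow> complex \<Rightarrow> complex \<Rightarrow> complex \<Rightarrow> complex \<Rightarrow> prm" where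
  "tr (Prm a11 a12 a21 a22 b11 b12 b21 b22 g1 g2 d1 d2 f) p11 p12 p21 p22 l1 l2 c k h =
    (let A = (\<lambda>u1 u2 w1 w2. a11*u1 * w1 + a12*u1 * w2 + a21*u2 * w1 + a22*u2 * w2);
         B = (\<lambda>u1 u2 w1 w2. b11*u1 * w1 + b12*u1 * w2 + b21*u2 * w1 + b22*u2 * w2);
         G1 = g1*p11 + g2*p21; G2 = g1*p12 + g2*p22;
         D1 = d1*p11 + d2*p21; D2 = d1*p12 + d2*p22;
         bb = (\<lambda>u1 u2 w1 w2 Gi Dj li lj. (B u1 u2 w1 w2 + Gi*lj + li*Dj + f*li*lj - (k/c)*A u1 u2 w1 w2)/h)
     in Prm (A p11 p21 p11 p21 / c) (A p11 p21 p12 p22 / c) (A p12 p22 p11 p21 / c) (A p12 p22 p12 p22 / c)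
       (bb p11 p21 p11 p21 G1 D1 l1 l1) (bb p11 p21 p12 p22 G1 D2 l1 l2)
       (bb p12 p22 p11 p21 G2 D1 l2 l1) (bb p12 p22 p12 p22 G2 D2 l2 l2)
       (c*(G1 + f*l1)/h) (c*(G2 + f*l2)/h) (c*(D1 + f*l1)/h) (c*(D2 + f*l2)/h) (f*c^2/h))"

lemma tr_works:
  assumes "c \<noteq> 0" "h \<noteq> 0"
  shows "Sh P (Tm p11 p12 p21 p22 l1 l2 c k h x) (Tm p11 p12 p21 p22 l1 l2 c k h y)
       = Tm p11 p12 p21 p22 l1 l2 c k h (Sh (tr P p11 p12 p21 p22 l1 l2 c k h) x y)"
proof -
  obtain a11 a12 a21 a22 b11 b12 b21 b22 g1 g2 d1 d2 f where P: "P = Prm a11 a12 a21 a22 b11 b12 b21 b22 g1 g2 d1 d2 f"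
    by (cases P) auto
  show ?thesis unfolding P vec4_eq using assms
    apply (simp add: Tm_def Let_def)
    apply (intro conjI)
    apply (simp add: field_simps; algebra)
    apply (simp add: field_simps; algebra)
    done
qed

lemma prm_fix: "pa11 Q = x1 \<Longrightarrow> pa12 Q = x2 \<Longrightarrow> pa21 Q = x3 \<Longrightarrow> pa22 Q = x4 \<Longrightarrow>
  pb11 Q = x5 \<Longrightarrow> pb12 Q = x6 \<Longrightarrow> pb21 Q = x7 \<Longrightarrow> pb22 Q = x8 \<Longrightarrow>
  pg1 Q = x9 \<Longrightarrow> pg2 Q = x10 \<Longrightarrow> pd1 Q = x11 \<Longrightarrow> pd2 Q = x12 \<Longrightarrow> pf Q = x13 \<Longrightarrow>
  Q = Prm x1 x2 x3 x4 x5 x6 x7 x8 x9 x10 x11 x12 x13"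
  by (cases Q) simp

lemma sum14: "(\<Sum>i\<in>{1..4::nat}. f i) = f 1 + f 2 + f 3 + f 4"
  by (simp add: numeral_eq_Suc atLeastAtMostSuc_conv ac_simps)
lemma e_v4: "e 1 = v4 1 0 0 0" "e 2 = v4 0 1 0 0" "e 3 = v4 0 0 1 0" "e 4 = v4 0 0 0 1"
  by (simp_all add: e_def v4_def vec_eq_iff axis_def forall_4)
lemma v4_ops[simp]: "v4 a b c d + v4 a' b' c' d' = v4 (a+a') (b+b') (c+c') (d+d')"
  "k *s v4 a b c d = v4 (k*a) (k*b) (k*c) (k*d)" "- v4 a b c d = v4 (-a) (-b) (-c) (-d)"
  "(0::vec4) = v4 0 0 0 0"
  by (simp_all add: vec4_eq)

lemmas Mdefs = M01_def M02_def M03_def M04_def M05_def M06_def M07_def M08_def M09_def M10_def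
  M11_def M12_def M13_def M14_def M15_def M16_def M17_def M18_def M19_def M20_def M21_def M22_def


lemma M03_Sh: "M03 a = Sh (Prm 0 1 (-1) 0 0 0 0 0 a 0 (1-a) 0 0)" by (intro ext, simp only: Mdefs tbl_def sum14, simp add: vec4_eq e_v4 algebra_simps)
lemma M04_Sh: "M04 a = Sh (Prm 0 1 (-1) 0 0 0 0 1 a 0 (1-a) 0 0)" by (intro ext, simp only: Mdefs tbl_def sum14, simp add: vec4_eq e_v4 algebra_simps)
lemma M05_Sh: "M05 = Sh (Prm 0 1 (-1) 0 0 0 0 0 0 1 1 (-1) 0)" by (intro ext, simp only: Mdefs tbl_def sum14, simp add: vec4_eq e_v4 algebra_simps)
lemma M06_Sh: "M06 = Sh (Prm 0 1 (-1) 0 0 0 0 1 0 1 1 (-1) 0)" by (intro ext, simp only: Mdefs tbl_def sum14, simp add: vec4_eq e_v4 algebra_simps)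
lemma M07_Sh: "M07 = Sh (Prm 0 1 (-1) 0 0 0 0 0 0 0 0 0 1)" by (intro ext, simp only: Mdefs tbl_def sum14, simp add: vec4_eq e_v4 algebra_simps)
lemma M08_Sh: "M08 = Sh (Prm 0 1 (-1) 0 0 1 0 0 0 0 0 0 1)" by (intro ext, simp only: Mdefs tbl_def sum14, simp add: vec4_eq e_v4 algebra_simps)
lemma M09_Sh: "M09 = Sh (Prm 0 1 (-1) 0 1 0 0 0 0 0 0 0 1)" by (intro ext, simp only: Mdefs tbl_def sum14, simp add: vec4_eq e_v4 algebra_simps)
lemma M10_Sh: "M10 a = Sh (Prm 0 1 (-1) 0 a 0 0 0 1 0 (-1) 0 1)" by (intro ext, simp only: Mdefs tbl_def sum14, simp add: vec4_eq e_v4 algebra_simps)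
lemma M11_Sh: "M11 = Sh (Prm 0 1 (-1) 0 0 1 0 0 1 0 (-1) 0 1)" by (intro ext, simp only: Mdefs tbl_def sum14, simp add: vec4_eq e_v4 algebra_simps)
lemma M12_Sh: "M12 a = Sh (Prm 0 1 (-1) 0 a 0 0 1 1 0 (-1) 0 1)" by (intro ext, simp only: Mdefs tbl_def sum14, simp add: vec4_eq e_v4 algebra_simps)
lemma M13_Sh: "M13 a = Sh (Prm 1 1 0 a 0 0 0 0 0 0 0 1 0)" by (intro ext, simp only: Mdefs tbl_def sum14, simp add: vec4_eq e_v4 algebra_simps)
lemma M14_Sh: "M14 a = Sh (Prm 1 1 0 a 0 0 1 0 0 0 0 1 0)" by (intro ext, simp only: Mdefs tbl_def sum14, simp add: vec4_eq e_v4 algebra_simps)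
lemma M15_Sh: "M15 a = Sh (Prm 1 1 0 a 0 0 0 0 0 0 1 ((1 - csqrt (1 - 4 * a)) / 2) 0)" by (intro ext, simp only: Mdefs tbl_def sum14, simp add: vec4_eq e_v4 algebra_simps)
lemma M16_Sh: "M16 a = Sh (Prm 1 1 0 a 0 0 0 1 0 0 1 ((1 - csqrt (1 - 4 * a)) / 2) 0)" by (intro ext, simp only: Mdefs tbl_def sum14, simp add: vec4_eq e_v4 algebra_simps)
lemma M17_Sh: "M17 a = Sh (Prm 1 1 0 a 0 0 0 0 0 0 1 ((1 + csqrt (1 - 4 * a)) / 2) 0)" by (intro ext, simp only: Mdefs tbl_def sum14, simp add: vec4_eq e_v4 algebra_simps)
lemma M18_Sh: "M18 a = Sh (Prm 1 1 0 a 0 0 0 1 0 0 1 ((1 + csqrt (1 - 4 * a)) / 2) 0)" by (intro ext, simp only: Mdefs tbl_def sum14, simp add: vec4_eq e_v4 algebra_simps)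
lemma M19_Sh: "M19 = Sh (Prm 1 0 0 1 0 0 0 0 0 0 1 0 0)" by (intro ext, simp only: Mdefs tbl_def sum14, simp add: vec4_eq e_v4 algebra_simps)
lemma M20_Sh: "M20 = Sh (Prm 1 0 0 1 0 1 0 0 0 0 1 0 0)" by (intro ext, simp only: Mdefs tbl_def sum14, simp add: vec4_eq e_v4 algebra_simps)
lemma M21_Sh: "M21 = Sh (Prm 1 0 0 1 0 0 0 0 0 0 1 \<i> 0)" by (intro ext, simp only: Mdefs tbl_def sum14, simp add: vec4_eq e_v4 algebra_simps)
lemma M22_Sh: "M22 = Sh (Prm 1 0 0 1 0 1 0 0 0 0 1 \<i> 0)" by (intro ext, simp only: Mdefs tbl_def sum14, simp add: vec4_eq e_v4 algebra_simps)
lemma M01_sw: "M01 x y = v4 0 (x$1*y$1) 0 (x$2*y$3)" by (simp only: Mdefs tbl_def sum14, simp add: vec4_eq e_v4)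
lemma M02_sw: "M02 x y = v4 0 (x$1*y$1) 0 (x$2*y$3 + x$3*y$1)" by (simp only: Mdefs tbl_def sum14, simp add: vec4_eq e_v4)

lemma clin_iff: "clin f \<longleftrightarrow> (\<forall>x y. f (x+y) = f x + f y) \<and> (\<forall>c x. f (c *s x) = c *s f x)"
  unfolding clin_def by (subst Vector_Spaces.linear_iff) (simp add: vec.vector_space_axioms)

lemma clinD: assumes "clin f" shows "f (x+y) = f x + f y" "f (c *s x) = c *s f x"
  using assms by (auto simp: clin_iff)

lemma clin_0: "clin f \<Longrightarrow> f 0 = 0"
  using clinD(2)[of f 0 0] by simp

definition siso :: "alg4 \<Rightarrow> alg4 \<Rightarrow> bool" where
  "siso S S' \<longleftrightarrow> (\<exists>T. clin T \<and> bij T \<and> (\<forall>a b. S (T a) (T b) = T (S' a b)))"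

definition Leib :: "alg4 \<Rightarrow> bool" where
  "Leib S \<longleftrightarrow> (\<forall>x y z. S (S x y) z = S (S x z) y + S x (S y z))"

lemma siso_refl: "siso S S"
  unfolding siso_def by (rule exI[of _ id]) (simp add: clin_iff)

lemma siso_eq: "S' = S'' \<Longrightarrow> siso S S' \<Longrightarrow> siso S S''" by simp

lemma siso_trans: assumes "siso S1 S2" "siso S2 S3" shows "siso S1 S3"
proof -
  obtain T1 where T1: "clin T1" "bij T1" "\<forall>a b. S1 (T1 a) (T1 b) = T1 (S2 a b)"
    using assms(1) unfolding siso_def by blast
  obtain T2 where T2: "clin T2" "bij T2" "\<forall>a b. S2 (T2 a) (T2 b) = T2 (S3 a b)"
    using assms(2) unfolding siso_def by blast
  have "clin (T1 \<circ> T2)" using T1(1) T2(1) by (simp add: clin_iff)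
  moreover have "bij (T1 \<circ> T2)" using T1(2) T2(2) by (rule bij_comp[rotated])
  moreover have "\<forall>a b. S1 ((T1 \<circ> T2) a) ((T1 \<circ> T2) b) = (T1 \<circ> T2) (S3 a b)"
    using T1(3) T2(3) by simp
  ultimately show ?thesis unfolding siso_def by blast
qed

lemma siso_Leib: assumes "siso S S'" "Leib S'" shows "Leib S"
proof -
  obtain T where T: "clin T" "bij T" "\<forall>a b. S (T a) (T b) = T (S' a b)"
    using assms(1) unfolding siso_def by blast
  show ?thesis unfolding Leib_def
  proof (intro allI)
    fix x y z
    obtain a b c where abc: "x = T a" "y = T b" "z = T c" using T(2) by (metis bij_pointE)
    have "S (S x y) z = T (S' (S' a b) c)" "S (S x z) y = T (S' (S' a c) b)" "S x (S y z) = T (S' a (S' b c))"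
      using T(3) abc by simp_all
    moreover have "S' (S' a b) c = S' (S' a c) b + S' a (S' b c)" using assms(2) unfolding Leib_def by blast
    ultimately show "S (S x y) z = S (S x z) y + S x (S y z)" using clinD(1)[OF T(1)] by simp
  qed
qed

lemma siso_iso: assumes "siso L M" shows "isomorphic_alg L M"
proof -
  obtain T where T: "clin T" "bij T" "\<forall>a b. L (T a) (T b) = T (M a b)"
    using assms(1) unfolding siso_def by blast
  have "clin (inv T)"
    using T(1,2) unfolding clin_def by (simp add: bij_is_inj vec.inj_linear_imp_inv_linear)
  moreover have "bij (inv T)" using T(2) by (simp add: bij_imp_bij_inv)
  moreover have "inv T (L x y) = M (inv T x) (inv T y)" for x y
  proof -
    have "L x y = T (M (inv T x) (inv T y))"
      by (metis T(2,3) bij_inv_eq_iff)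
    thus ?thesis by (metis T(2) bij_inv_eq_iff)
  qed
  ultimately show ?thesis unfolding isomorphic_alg_def by blast
qed

lemma Tm_clin: "clin (Tm p11 p12 p21 p22 l1 l2 c k h)"
  by (simp add: clin_iff Tm_def vec4_eq algebra_simps)

lemma Tm_inj: assumes "p11*p22 - p12*p21 \<noteq> 0" "c \<noteq> 0" "h \<noteq> 0"
  shows "inj (Tm p11 p12 p21 p22 l1 l2 c k h)"
proof -
  have "x = 0" if "Tm p11 p12 p21 p22 l1 l2 c k h x = 0" for x
  proof -
    have e: "p11*x$1 + p12*x$2 = 0" "p21*x$1 + p22*x$2 = 0" "l1*x$1 + l2*x$2 + c*x$3 = 0" "k*x$3 + h*x$4 = 0"
      using that by (simp_all add: Tm_def vec4_eq)
    have "(p11*p22 - p12*p21) * x$1 = p22*(p11*x$1 + p12*x$2) - p12*(p21*x$1 + p22*x$2)"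
      by (simp add: algebra_simps)
    hence 1: "x$1 = 0" using e assms by simp
    have "(p11*p22 - p12*p21) * x$2 = p11*(p21*x$1 + p22*x$2) - p21*(p11*x$1 + p12*x$2)"
      by (simp add: algebra_simps)
    hence 2: "x$2 = 0" using e assms by simp
    have 3: "x$3 = 0" using e 1 2 assms by simp
    have 4: "x$4 = 0" using e 3 assms by simp
    show ?thesis using 1 2 3 4 by (simp add: vec4_eq)
  qed
  moreover have "clin (Tm p11 p12 p21 p22 l1 l2 c k h)" by (rule Tm_clin)
  ultimately show ?thesis unfolding clin_def using vec.linear_inj_iff_eq_0 by blast
qed

lemma tr_siso: assumes "p11*p22 - p12*p21 \<noteq> 0" "c \<noteq> 0" "h \<noteq> 0"
  shows "siso (Sh P) (Sh (tr P p11 p12 p21 p22 l1 l2 c k h))"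
proof -
  have i: "inj (Tm p11 p12 p21 p22 l1 l2 c k h)" using Tm_inj assms by blast
  have "bij (Tm p11 p12 p21 p22 l1 l2 c k h)"
    using vec.linear_inj_imp_surj[OF Tm_clin[unfolded clin_def] i] i by (simp add: bij_def)
  thus ?thesis unfolding siso_def using Tm_clin tr_works[OF assms(2,3)] by blast
qed



definition concl :: "alg4 \<Rightarrow> bool" where
  "concl S \<longleftrightarrow> siso S M01 \<or> siso S M02 \<or> (\<exists>\<alpha>. siso S (M03 \<alpha>)) \<or> (\<exists>\<alpha>. siso S (M04 \<alpha>))
    \<or> siso S M05 \<or> siso S M06 \<or> siso S M07 \<or> siso S M08 \<or> siso S M09
    \<or> (\<exists>\<alpha>. siso S (M10 \<alpha>)) \<or> siso S M11 \<or> (\<exists>\<alpha>. siso S (M12 \<alpha>)) \<or> (\<exists>\<alpha>. siso S (M13 \<alpha>))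
    \<or> (\<exists>\<alpha>. siso S (M14 \<alpha>)) \<or> (\<exists>\<alpha>. siso S (M15 \<alpha>)) \<or> (\<exists>\<alpha>. siso S (M16 \<alpha>))
    \<or> (\<exists>\<alpha>. \<alpha> \<noteq> 0 \<and> siso S (M17 \<alpha>)) \<or> (\<exists>\<alpha>. \<alpha> \<noteq> 0 \<and> siso S (M18 \<alpha>))
    \<or> siso S M19 \<or> siso S M20 \<or> siso S M21 \<or> siso S M22"

lemma concl_siso: assumes "siso S S'" "concl S'" shows "concl S"
  using assms(2) unfolding concl_def using siso_trans[OF assms(1)] by meson

lemma step: assumes "p11*p22 - p12*p21 \<noteq> 0" "c \<noteq> 0" "h \<noteq> 0"
  "tr P p11 p12 p21 p22 l1 l2 c k h = Q" shows "siso (Sh P) (Sh Q)"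
  using tr_siso assms by metis

lemma cstep: assumes "tr P p11 p12 p21 p22 l1 l2 c k h = Q" "p11*p22 - p12*p21 \<noteq> 0" "c \<noteq> 0" "h \<noteq> 0"
  "concl (Sh Q)" shows "concl (Sh P)"
  using step[OF assms(2-4,1)] assms(5) concl_siso by blast

lemma nonleib: "siso S S' \<Longrightarrow> \<not> Leib S \<Longrightarrow> \<not> Leib S'"
  using siso_Leib by blast

lemma nstep: assumes "tr P p11 p12 p21 p22 l1 l2 c k h = Q" "p11*p22 - p12*p21 \<noteq> 0" "c \<noteq> 0" "h \<noteq> 0"
  "\<not> Leib (Sh P)" shows "\<not> Leib (Sh Q)"
  using step[OF assms(2-4,1)] assms(5) nonleib by blast

lemma swapT: "clin (\<lambda>a::vec4. v4 (a$1) (a$3) (a$2) (a$4)) \<and> bij (\<lambda>a::vec4. v4 (a$1) (a$3) (a$2) (a$4))"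
proof -
  let ?T = "\<lambda>a::vec4. v4 (a$1) (a$3) (a$2) (a$4)"
  have cl: "clin ?T" by (simp add: clin_iff vec4_eq)
  have inv: "?T (?T a) = a" for a by (simp add: vec4_eq)
  have "bij ?T" by (rule bijI'; metis inv)
  thus ?thesis using cl by simp
qed

lemma c01: "concl (Sh (Prm 1 0 0 0 0 0 0 0 0 0 0 1 0))"
proof -
  have "siso (Sh (Prm 1 0 0 0 0 0 0 0 0 0 0 1 0)) M01"
    unfolding siso_def using swapT by (intro exI[of _ "\<lambda>a::vec4. v4 (a$1) (a$3) (a$2) (a$4)"]) (simp add: M01_sw vec4_eq)
  thus ?thesis unfolding concl_def by blast
qed
lemma c02: "concl (Sh (Prm 1 0 0 0 0 0 1 0 0 0 0 1 0))"
proof -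
  have "siso (Sh (Prm 1 0 0 0 0 0 1 0 0 0 0 1 0)) M02"
    unfolding siso_def using swapT by (intro exI[of _ "\<lambda>a::vec4. v4 (a$1) (a$3) (a$2) (a$4)"]) (simp add: M02_sw vec4_eq)
  thus ?thesis unfolding concl_def by blast
qed
lemma c03: "concl (Sh (Prm 0 1 (-1) 0 0 0 0 0 a 0 (1-a) 0 0))" unfolding concl_def M03_Sh using siso_refl by blast
lemma c04: "concl (Sh (Prm 0 1 (-1) 0 0 0 0 1 a 0 (1-a) 0 0))" unfolding concl_def M04_Sh using siso_refl by blast
lemma c05: "concl (Sh (Prm 0 1 (-1) 0 0 0 0 0 0 1 1 (-1) 0))" unfolding concl_def M05_Sh using siso_refl by blast
lemma c06: "concl (Sh (Prm 0 1 (-1) 0 0 0 0 1 0 1 1 (-1) 0))" unfolding concl_def M06_Sh using siso_refl by blast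
lemma c07: "concl (Sh (Prm 0 1 (-1) 0 0 0 0 0 0 0 0 0 1))" unfolding concl_def M07_Sh using siso_refl by blast
lemma c08: "concl (Sh (Prm 0 1 (-1) 0 0 1 0 0 0 0 0 0 1))" unfolding concl_def M08_Sh using siso_refl by blast
lemma c09: "concl (Sh (Prm 0 1 (-1) 0 1 0 0 0 0 0 0 0 1))" unfolding concl_def M09_Sh using siso_refl by blast
lemma c10: "concl (Sh (Prm 0 1 (-1) 0 a 0 0 0 1 0 (-1) 0 1))" unfolding concl_def M10_Sh using siso_refl by blast
lemma c11: "concl (Sh (Prm 0 1 (-1) 0 0 1 0 0 1 0 (-1) 0 1))" unfolding concl_def M11_Sh using siso_refl by blast
lemma c12: "concl (Sh (Prm 0 1 (-1) 0 a 0 0 1 1 0 (-1) 0 1))" unfolding concl_def M12_Sh using siso_refl by blast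
lemma c13: "concl (Sh (Prm 1 1 0 a 0 0 0 0 0 0 0 1 0))" unfolding concl_def M13_Sh using siso_refl by blast
lemma c14: "concl (Sh (Prm 1 1 0 a 0 0 1 0 0 0 0 1 0))" unfolding concl_def M14_Sh using siso_refl by blast
lemma c15: "r = (1 - csqrt (1 - 4 * a)) / 2 \<Longrightarrow> concl (Sh (Prm 1 1 0 a 0 0 0 0 0 0 1 r 0))"
  unfolding concl_def M15_Sh using siso_refl by blast
lemma c16: "r = (1 - csqrt (1 - 4 * a)) / 2 \<Longrightarrow> concl (Sh (Prm 1 1 0 a 0 0 0 1 0 0 1 r 0))"
  unfolding concl_def M16_Sh using siso_refl by blast
lemma c17: "r = (1 + csqrt (1 - 4 * a)) / 2 \<Longrightarrow> a \<noteq> 0 \<Longrightarrow> concl (Sh (Prm 1 1 0 a 0 0 0 0 0 0 1 r 0))"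
  unfolding concl_def M17_Sh using siso_refl by blast
lemma c18: "r = (1 + csqrt (1 - 4 * a)) / 2 \<Longrightarrow> a \<noteq> 0 \<Longrightarrow> concl (Sh (Prm 1 1 0 a 0 0 0 1 0 0 1 r 0))"
  unfolding concl_def M18_Sh using siso_refl by blast
lemma c19: "concl (Sh (Prm 1 0 0 1 0 0 0 0 0 0 1 0 0))" unfolding concl_def M19_Sh using siso_refl by blast
lemma c20: "concl (Sh (Prm 1 0 0 1 0 1 0 0 0 0 1 0 0))" unfolding concl_def M20_Sh using siso_refl by blast
lemma c21: "concl (Sh (Prm 1 0 0 1 0 0 0 0 0 0 1 \<i> 0))" unfolding concl_def M21_Sh using siso_refl by blast
lemma c22: "concl (Sh (Prm 1 0 0 1 0 1 0 0 0 0 1 \<i> 0))" unfolding concl_def M22_Sh using siso_refl by blast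

lemma Leib_B0: "Leib (Sh (Prm a11 a12 a21 a22 b11 b12 b21 b22 0 0 0 0 0))"
  unfolding Leib_def by (simp add: vec4_eq)
lemma Leib_A0: "Leib (Sh (Prm 0 0 0 0 b11 b12 b21 b22 g1 g2 d1 d2 f))"
  unfolding Leib_def by (simp add: vec4_eq)
lemma Leib_A2: "Leib (Sh (Prm 0 1 (-1) 0 b11 b12 b21 b22 g1 g2 (-g1) (-g2) 0))"
  unfolding Leib_def by (simp add: vec4_eq algebra_simps)
lemma Leib_B1: "Leib (Sh (Prm 1 0 0 0 b11 b12 b21 b22 0 0 d1 0 0))"
  unfolding Leib_def by (simp add: vec4_eq algebra_simps)
lemma Leib_Br: "Leib (Sh (Prm 1 1 0 0 b11 b12 b21 b22 0 0 1 1 0))"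
  unfolding Leib_def by (simp add: vec4_eq algebra_simps)


lemma scale: assumes "t \<noteq> 0"
  "concl (Sh (Prm a11 a12 a21 a22 (b11/t) (b12/t) (b21/t) (b22/t) g1 g2 d1 d2 0))"
  shows "concl (Sh (Prm a11 a12 a21 a22 b11 b12 b21 b22 g1 g2 d1 d2 0))"
proof (rule cstep[of _ t 0 0 t 0 0 "t^2" 0 "t^3"])
  show "tr (Prm a11 a12 a21 a22 b11 b12 b21 b22 g1 g2 d1 d2 0) t 0 0 t 0 0 (t^2) 0 (t^3) =
    Prm a11 a12 a21 a22 (b11/t) (b12/t) (b21/t) (b22/t) g1 g2 d1 d2 0"
    using assms(1) by (simp add: Let_def field_simps power2_eq_square power3_eq_cube)
qed (use assms in simp_all)

lemma L13: "concl (Sh (Prm 1 1 0 a b11 b12 b21 b22 0 0 0 1 0))"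
proof (rule cstep[of _ 1 0 0 1 "b11 - b12" "b11*a - b22" 1 b11 1])
  show "tr (Prm 1 1 0 a b11 b12 b21 b22 0 0 0 1 0) 1 0 0 1 (b11 - b12) (b11*a - b22) 1 b11 1
     = Prm 1 1 0 a 0 0 b21 0 0 0 0 1 0" by (simp add: Let_def algebra_simps)
  show "concl (Sh (Prm 1 1 0 a 0 0 b21 0 0 0 0 1 0))"
  proof (cases "b21 = 0")
    case True thus ?thesis using c13 by simp
  next
    case False thus ?thesis using scale[of b21 1 1 0 a 0 0 b21 0 0 0 0 1] c14 by simp
  qed
qed simp_all

lemma root_cases: assumes "r^2 - r + a = (0::complex)"
  shows "r = (1 - csqrt (1 - 4 * a)) / 2 \<or> r = (1 + csqrt (1 - 4 * a)) / 2"
proof -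
  let ?s = "csqrt (1 - 4 * a)"
  have hs: "?s^2 = 1 - 4*a" by simp
  have "(2*r - 1 - ?s) * (2*r - 1 + ?s) = (2*r-1)^2 - ?s^2" by (simp add: algebra_simps power2_eq_square)
  also have "\<dots> = 4 * (r^2 - r + a)" unfolding hs by (simp add: algebra_simps power2_eq_square)
  finally have "(2*r - 1 - ?s) * (2*r - 1 + ?s) = 4 * (r^2 - r + a)" .
  hence "2*r - 1 - ?s = 0 \<or> 2*r - 1 + ?s = 0" using assms by simp
  moreover have "r = (1 + ?s) / 2" if "2*r - 1 - ?s = 0" using that by (simp add: field_simps)
  moreover have "r = (1 - ?s) / 2" if "2*r - 1 + ?s = 0" using that by (simp add: field_simps)
  ultimately show ?thesis by blast
qed

lemma L15: assumes "r^2 - r + a = 0" "r \<noteq> 1"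
  shows "concl (Sh (Prm 1 1 0 a b11 b12 b21 b22 0 0 1 r 0))"
proof -
  have r1: "1 - r \<noteq> 0" using assms(2) by simp
  obtain l1 where hl1: "l1 * (1 - r) = b12 - b11" using r1 by (metis nonzero_eq_divide_eq)
  define R where "R = b22 - b21*r - (l1 + b11)*a"
  show ?thesis
  proof (rule cstep[of _ 1 0 0 1 l1 "-b21" 1 "l1 + b11" 1])
    show "tr (Prm 1 1 0 a b11 b12 b21 b22 0 0 1 r 0) 1 0 0 1 l1 (-b21) 1 (l1 + b11) 1
     = Prm 1 1 0 a 0 0 0 R 0 0 1 r 0" unfolding R_def
      apply (simp add: Let_def)
      using hl1 by algebra
    have rc: "r = (1 - csqrt (1 - 4 * a)) / 2 \<or> (r = (1 + csqrt (1 - 4 * a)) / 2 \<and> a \<noteq> 0)"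
      using root_cases[OF assms(1)] assms(2) by auto
    show "concl (Sh (Prm 1 1 0 a 0 0 0 R 0 0 1 r 0))"
    proof (cases "R = 0")
      case True thus ?thesis using rc c15 c17 by auto
    next
      case False
      have "concl (Sh (Prm 1 1 0 a 0 0 0 1 0 0 1 r 0))" using rc c16 c18 by auto
      thus ?thesis using scale[of R 1 1 0 a 0 0 0 R 0 0 1 r] False by simp
    qed
  qed simp_all
qed

lemma L19: "concl (Sh (Prm 1 0 0 1 b11 b12 b21 b22 0 0 1 0 0))"
proof (rule cstep[of _ 1 0 0 1 "b22 - b11" "-b21" 1 b22 1])
  show "tr (Prm 1 0 0 1 b11 b12 b21 b22 0 0 1 0 0) 1 0 0 1 (b22 - b11) (-b21) 1 b22 1
     = Prm 1 0 0 1 0 b12 0 0 0 0 1 0 0" by (simp add: Let_def algebra_simps)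
  show "concl (Sh (Prm 1 0 0 1 0 b12 0 0 0 0 1 0 0))"
  proof (cases "b12 = 0")
    case True thus ?thesis using c19 by simp
  next
    case False thus ?thesis using scale[of b12 1 0 0 1 0 b12 0 0 0 0 1 0] c20 by simp
  qed
qed simp_all

lemma L21: "concl (Sh (Prm 1 0 0 1 b11 b12 b21 b22 0 0 1 \<i> 0))"
proof (rule cstep[of _ 1 0 0 1 "b22 - \<i>*b21 - b11" "-b21" 1 "b22 - \<i>*b21" 1])
  show "tr (Prm 1 0 0 1 b11 b12 b21 b22 0 0 1 \<i> 0) 1 0 0 1 (b22 - \<i>*b21 - b11) (-b21) 1 (b22 - \<i>*b21) 1
     = Prm 1 0 0 1 0 (b12 + \<i>*(b22 - \<i>*b21 - b11)) 0 0 0 0 1 \<i> 0" by (simp add: Let_def algebra_simps)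
  show "concl (Sh (Prm 1 0 0 1 0 (b12 + \<i>*(b22 - \<i>*b21 - b11)) 0 0 0 0 1 \<i> 0))"
  proof (cases "b12 + \<i>*(b22 - \<i>*b21 - b11) = 0")
    case True thus ?thesis using c21 by simp
  next
    case False thus ?thesis using scale[of "b12 + \<i>*(b22 - \<i>*b21 - b11)" 1 0 0 1 0 "b12 + \<i>*(b22 - \<i>*b21 - b11)" 0 0 0 0 1 \<i>] c22 by simp
  qed
qed simp_all

lemma L01: "concl (Sh (Prm 1 0 0 0 b11 b12 b21 b22 0 0 0 1 0))"
proof (rule cstep[of _ 1 0 0 1 "-b12" "-b22" 1 b11 1])
  show "tr (Prm 1 0 0 0 b11 b12 b21 b22 0 0 0 1 0) 1 0 0 1 (-b12) (-b22) 1 b11 1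
     = Prm 1 0 0 0 0 0 b21 0 0 0 0 1 0" by (simp add: Let_def algebra_simps)
  show "concl (Sh (Prm 1 0 0 0 0 0 b21 0 0 0 0 1 0))"
  proof (cases "b21 = 0")
    case True thus ?thesis using c01 by simp
  next
    case False thus ?thesis using scale[of b21 1 0 0 0 0 0 b21 0 0 0 0 1] c02 by simp
  qed
qed simp_all


lemma Bn: assumes nl: "\<not> Leib (Sh (Prm 1 1 0 a b11 b12 b21 b22 0 0 d1 d2 0))"
  shows "concl (Sh (Prm 1 1 0 a b11 b12 b21 b22 0 0 d1 d2 0))"
proof -
  define Q where "Q = d2^2 - d1*d2 + a*d1^2"
  show ?thesis
  proof (cases "Q = 0")
    case False
    let ?Q = "tr (Prm 1 1 0 a b11 b12 b21 b22 0 0 d1 d2 0) d2 (a*d1) (-d1) (d2 - d1) 0 0 Q 0 (Q^2)"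
    have e: "?Q = Prm 1 1 0 a (pb11 ?Q) (pb12 ?Q) (pb21 ?Q) (pb22 ?Q) 0 0 0 1 0"
      apply (rule prm_fix)
      apply (simp_all add: Let_def field_simps power2_eq_square False)
      apply ((insert Q_def, algebra)+)?
      done
    have det: "d2 * (d2 - d1) - a * d1 * - d1 \<noteq> 0" using False unfolding Q_def by (simp add: algebra_simps power2_eq_square)
    show ?thesis by (rule cstep[OF e det False]) (simp_all add: False L13)
  next
    case True
    have d1: "d1 \<noteq> 0"
    proof
      assume "d1 = 0"
      hence "d2 = 0" using True unfolding Q_def by simp
      thus False using nl Leib_B0 \<open>d1 = 0\<close> by blast
    qed
    define r where "r = d2 / d1"
    have e: "tr (Prm 1 1 0 a b11 b12 b21 b22 0 0 d1 d2 0) 1 0 0 1 0 0 1 0 d1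
       = Prm 1 1 0 a (b11/d1) (b12/d1) (b21/d1) (b22/d1) 0 0 1 r 0"
      using d1 unfolding r_def by (simp add: Let_def field_simps)
    have nl2: "\<not> Leib (Sh (Prm 1 1 0 a (b11/d1) (b12/d1) (b21/d1) (b22/d1) 0 0 1 r 0))"
      by (rule nstep[OF e _ _ d1 nl]) simp_all
    have rr: "r^2 - r + a = 0" using True d1 unfolding Q_def r_def
      by (simp add: field_simps power2_eq_square)
    have r1: "r \<noteq> 1"
    proof
      assume "r = 1"
      hence "a = 0" using rr by simp
      thus False using nl2 Leib_Br \<open>r = 1\<close> by blast
    qed
    show ?thesis by (rule cstep[OF e _ _ d1]) (simp_all add: L15[OF rr r1])
  qed
qed

lemma Bns: assumes nl: "\<not> Leib (Sh (Prm 1 a12 a21 a22 b11 b12 b21 b22 0 0 d1 d2 0))" and ne: "a12 \<noteq> a21"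
  shows "concl (Sh (Prm 1 a12 a21 a22 b11 b12 b21 b22 0 0 d1 d2 0))"
proof -
  define t where "t = 1 / (a12 - a21)"
  have t0: "t \<noteq> 0" and ht: "t * (a12 - a21) = 1" using ne unfolding t_def by simp_all
  let ?Q = "tr (Prm 1 a12 a21 a22 b11 b12 b21 b22 0 0 d1 d2 0) 1 (-a21*t) 0 t 0 0 1 0 1"
  have e: "?Q = Prm 1 1 0 (pa22 ?Q) (pb11 ?Q) (pb12 ?Q) (pb21 ?Q) (pb22 ?Q) 0 0 (pd1 ?Q) (pd2 ?Q) 0"
    apply (rule prm_fix)
      apply (simp_all add: Let_def algebra_simps)
      apply ((insert ht, algebra)+)?
      done
  have nl2: "\<not> Leib (Sh (Prm 1 1 0 (pa22 ?Q) (pb11 ?Q) (pb12 ?Q) (pb21 ?Q) (pb22 ?Q) 0 0 (pd1 ?Q) (pd2 ?Q) 0))"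
    by (rule nstep[OF e _ _ _ nl]) (simp_all add: t0)
  show ?thesis by (rule cstep[OF e _ _ _ Bn[OF nl2]]) (simp_all add: t0)
qed

lemma B2n: assumes nl: "\<not> Leib (Sh (Prm 1 0 0 1 b11 b12 b21 b22 0 0 d1 d2 0))"
  shows "concl (Sh (Prm 1 0 0 1 b11 b12 b21 b22 0 0 d1 d2 0))"
proof -
  define N where "N = d1^2 + d2^2"
  show ?thesis
  proof (cases "N = 0")
    case False
    let ?Q = "tr (Prm 1 0 0 1 b11 b12 b21 b22 0 0 d1 d2 0) d1 (-d2) d2 d1 0 0 N 0 (N^2)"
    have e: "?Q = Prm 1 0 0 1 (pb11 ?Q) (pb12 ?Q) (pb21 ?Q) (pb22 ?Q) 0 0 1 0 0"
      apply (rule prm_fix)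
      apply (simp_all add: Let_def field_simps power2_eq_square False)
      apply ((insert N_def, algebra)+)?
      done
    have det: "d1 * d1 - - d2 * d2 \<noteq> 0" using False unfolding N_def by (simp add: power2_eq_square)
    show ?thesis by (rule cstep[OF e det False]) (simp_all add: False L19)
  next
    case True
    have d1: "d1 \<noteq> 0"
    proof
      assume "d1 = 0"
      hence "d2 = 0" using True unfolding N_def by simp
      thus False using nl Leib_B0 \<open>d1 = 0\<close> by blast
    qed
    have "(d2 - \<i>*d1) * (d2 + \<i>*d1) = 0" using True unfolding N_def
      by (simp add: algebra_simps power2_eq_square)
    hence "d2 = \<i>*d1 \<or> d2 = -\<i>*d1" by (simp add: eq_neg_iff_add_eq_0)
    thus ?thesis
    proof
      assume d2: "d2 = \<i>*d1"
      have e: "tr (Prm 1 0 0 1 b11 b12 b21 b22 0 0 d1 d2 0) 1 0 0 1 0 0 1 0 d1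
         = Prm 1 0 0 1 (b11/d1) (b12/d1) (b21/d1) (b22/d1) 0 0 1 \<i> 0"
        using d1 d2 by (simp add: Let_def field_simps)
      show ?thesis by (rule cstep[OF e _ _ d1]) (simp_all add: L21)
    next
      assume d2: "d2 = -\<i>*d1"
      have e: "tr (Prm 1 0 0 1 b11 b12 b21 b22 0 0 d1 d2 0) 1 0 0 (-1) 0 0 1 0 d1
         = Prm 1 0 0 1 (b11/d1) (-b12/d1) (-b21/d1) (b22/d1) 0 0 1 \<i> 0"
        using d1 d2 by (simp add: Let_def field_simps)
      show ?thesis by (rule cstep[OF e _ _ d1]) (simp_all add: L21)
    qed
  qed
qed

lemma B1n: assumes nl: "\<not> Leib (Sh (Prm 1 0 0 0 b11 b12 b21 b22 0 0 d1 d2 0))"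
  shows "concl (Sh (Prm 1 0 0 0 b11 b12 b21 b22 0 0 d1 d2 0))"
proof -
  have d2: "d2 \<noteq> 0" using nl Leib_B1 by blast
  let ?Q = "tr (Prm 1 0 0 0 b11 b12 b21 b22 0 0 d1 d2 0) 1 0 (-d1/d2) 1 0 0 1 0 d2"
  have e: "?Q = Prm 1 0 0 0 (pb11 ?Q) (pb12 ?Q) (pb21 ?Q) (pb22 ?Q) 0 0 0 1 0"
    by (rule prm_fix) (simp_all add: Let_def field_simps d2)
  show ?thesis by (rule cstep[OF e _ _ d2]) (simp_all add: L01)
qed

lemma Bs: assumes nl: "\<not> Leib (Sh (Prm 1 s s a22 b11 b12 b21 b22 0 0 d1 d2 0))"
  shows "concl (Sh (Prm 1 s s a22 b11 b12 b21 b22 0 0 d1 d2 0))"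
proof -
  let ?Q = "tr (Prm 1 s s a22 b11 b12 b21 b22 0 0 d1 d2 0) 1 (-s) 0 1 0 0 1 0 1"
  define D where "D = pa22 ?Q"
  have e: "?Q = Prm 1 0 0 D (pb11 ?Q) (pb12 ?Q) (pb21 ?Q) (pb22 ?Q) 0 0 (pd1 ?Q) (pd2 ?Q) 0"
    unfolding D_def by (rule prm_fix) (simp_all add: Let_def algebra_simps)
  let ?P = "Prm 1 0 0 D (pb11 ?Q) (pb12 ?Q) (pb21 ?Q) (pb22 ?Q) 0 0 (pd1 ?Q) (pd2 ?Q) 0"
  have nl2: "\<not> Leib (Sh ?P)" by (rule nstep[OF e _ _ _ nl]) simp_all
  have cP: "concl (Sh ?P)"
  proof (cases "D = 0")
    case True thus ?thesis using B1n nl2 by simp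
  next
    case False
    define q where "q = csqrt D"
    have q0: "q \<noteq> 0" using False unfolding q_def by simp
    have qq: "q^2 = D" unfolding q_def by simp
    let ?Q2 = "tr ?P 1 0 0 (1/q) 0 0 1 0 1"
    have e2: "?Q2 = Prm 1 0 0 1 (pb11 ?Q2) (pb12 ?Q2) (pb21 ?Q2) (pb22 ?Q2) 0 0 (pd1 ?Q2) (pd2 ?Q2) 0"
      by (rule prm_fix) (simp_all add: Let_def field_simps power2_eq_square q0 qq[symmetric])
    have nl3: "\<not> Leib (Sh (Prm 1 0 0 1 (pb11 ?Q2) (pb12 ?Q2) (pb21 ?Q2) (pb22 ?Q2) 0 0 (pd1 ?Q2) (pd2 ?Q2) 0))"
      by (rule nstep[OF e2 _ _ _ nl2]) (simp_all add: q0)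
    show ?thesis by (rule cstep[OF e2 _ _ _ B2n[OF nl3]]) (simp_all add: q0)
  qed
  show ?thesis by (rule cstep[OF e _ _ _ cP]) simp_all
qed


lemma Ba11: assumes nl: "\<not> Leib (Sh (Prm a11 a12 a21 a22 b11 b12 b21 b22 0 0 d1 d2 0))" and a: "a11 \<noteq> 0"
  shows "concl (Sh (Prm a11 a12 a21 a22 b11 b12 b21 b22 0 0 d1 d2 0))"
proof -
  have e: "tr (Prm a11 a12 a21 a22 b11 b12 b21 b22 0 0 d1 d2 0) 1 0 0 1 0 0 a11 0 1
     = Prm 1 (a12/a11) (a21/a11) (a22/a11) b11 b12 b21 b22 0 0 (a11*d1) (a11*d2) 0"
    using a by (simp add: Let_def field_simps)
  have nl2: "\<not> Leib (Sh (Prm 1 (a12/a11) (a21/a11) (a22/a11) b11 b12 b21 b22 0 0 (a11*d1) (a11*d2) 0))"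
    by (rule nstep[OF e _ a _ nl]) simp_all
  have c: "concl (Sh (Prm 1 (a12/a11) (a21/a11) (a22/a11) b11 b12 b21 b22 0 0 (a11*d1) (a11*d2) 0))"
  proof (cases "a12/a11 = a21/a11")
    case True thus ?thesis using Bs nl2 by metis
  next
    case False thus ?thesis using Bns nl2 by blast
  qed
  show ?thesis by (rule cstep[OF e _ a _ c]) simp_all
qed

lemma Ball: assumes nl: "\<not> Leib (Sh (Prm a11 a12 a21 a22 b11 b12 b21 b22 0 0 d1 d2 0))"
  and q: "a11 \<noteq> 0 \<or> a12 + a21 \<noteq> 0 \<or> a22 \<noteq> 0"
  shows "concl (Sh (Prm a11 a12 a21 a22 b11 b12 b21 b22 0 0 d1 d2 0))"
proof (cases "a11 \<noteq> 0")
  case True thus ?thesis using Ba11 nl by blast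
next
  case False
  show ?thesis
  proof (cases "a22 \<noteq> 0")
    case True
    have e: "tr (Prm a11 a12 a21 a22 b11 b12 b21 b22 0 0 d1 d2 0) 0 1 1 0 0 0 1 0 1
       = Prm a22 a21 a12 a11 b22 b21 b12 b11 0 0 d2 d1 0"
      by (simp add: Let_def)
    have nl2: "\<not> Leib (Sh (Prm a22 a21 a12 a11 b22 b21 b12 b11 0 0 d2 d1 0))"
      by (rule nstep[OF e _ _ _ nl]) simp_all
    show ?thesis by (rule cstep[OF e _ _ _ Ba11[OF nl2 True]]) simp_all
  next
    case False2: False
    let ?Q = "tr (Prm a11 a12 a21 a22 b11 b12 b21 b22 0 0 d1 d2 0) 1 0 1 1 0 0 1 0 1"
    have e: "?Q = Prm (pa11 ?Q) (pa12 ?Q) (pa21 ?Q) (pa22 ?Q) (pb11 ?Q) (pb12 ?Q) (pb21 ?Q) (pb22 ?Q) 0 0 (pd1 ?Q) (pd2 ?Q) 0"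
      by (rule prm_fix) (simp_all add: Let_def)
    have p: "pa11 ?Q \<noteq> 0" using False False2 q by (simp add: Let_def)
    have nl2: "\<not> Leib (Sh (Prm (pa11 ?Q) (pa12 ?Q) (pa21 ?Q) (pa22 ?Q) (pb11 ?Q) (pb12 ?Q) (pb21 ?Q) (pb22 ?Q) 0 0 (pd1 ?Q) (pd2 ?Q) 0))"
      by (rule nstep[OF e _ _ _ nl]) simp_all
    show ?thesis by (rule cstep[OF e _ _ _ Ba11[OF nl2 p]]) simp_all
  qed
qed

lemma A2aL: "concl (Sh (Prm 0 1 (-1) 0 b11 b12 b21 b22 a 0 (1-a) 0 0))"
proof -
  have e: "tr (Prm 0 1 (-1) 0 b11 b12 b21 b22 a 0 (1-a) 0 0) 1 0 0 1 (-b11) (-(b12+b21)) 1 (b12 - a*(b12+b21)) 1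
     = Prm 0 1 (-1) 0 0 0 0 b22 a 0 (1-a) 0 0"
    by (simp add: Let_def algebra_simps)
  have c: "concl (Sh (Prm 0 1 (-1) 0 0 0 0 b22 a 0 (1-a) 0 0))"
  proof (cases "b22 = 0")
    case True thus ?thesis using c03 by simp
  next
    case False
    have e2: "tr (Prm 0 1 (-1) 0 0 0 0 b22 a 0 (1-a) 0 0) 1 0 0 (1/b22) 0 0 (1/b22) 0 (1/b22)
      = Prm 0 1 (-1) 0 0 0 0 1 a 0 (1-a) 0 0"
      using False by (simp add: Let_def field_simps)
    show ?thesis by (rule cstep[OF e2 _ _ _ c04]) (simp_all add: False)
  qed
  show ?thesis by (rule cstep[OF e _ _ _ c]) simp_all
qed

lemma A2bL: "concl (Sh (Prm 0 1 (-1) 0 b11 b12 b21 b22 0 1 1 (-1) 0))"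
proof -
  have e: "tr (Prm 0 1 (-1) 0 b11 b12 b21 b22 0 1 1 (-1) 0) 1 0 0 1 (-b11) (-(b21+b12)) 1 (b12+b11) 1
     = Prm 0 1 (-1) 0 0 0 0 b22 0 1 1 (-1) 0"
    by (simp add: Let_def algebra_simps)
  have c: "concl (Sh (Prm 0 1 (-1) 0 0 0 0 b22 0 1 1 (-1) 0))"
  proof (cases "b22 = 0")
    case True thus ?thesis using c05 by simp
  next
    case False thus ?thesis using scale[of b22 0 1 "-1" 0 0 0 0 b22 0 1 1 "-1"] c06 by simp
  qed
  show ?thesis by (rule cstep[OF e _ _ _ c]) simp_all
qed

lemma A2s: assumes s1: "g1 + d1 \<noteq> 0"
  shows "concl (Sh (Prm 0 1 (-1) 0 b11 b12 b21 b22 g1 g2 d1 d2 0))"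
proof -
  define sg where "sg = g1 + d1"
  have sg: "sg \<noteq> 0" using s1 unfolding sg_def .
  have d1: "d1 = sg - g1" unfolding sg_def by simp
  define s2 where "s2 = g2 + d2"
  define D where "D = g1 * s2 - g2 * sg"
  show ?thesis
  proof (cases "D = 0")
    case True
    let ?Q = "tr (Prm 0 1 (-1) 0 b11 b12 b21 b22 g1 g2 d1 d2 0) 1 s2 0 (-sg) 0 0 (-sg) 0 (- (sg^2))"
    have e: "?Q = Prm 0 1 (-1) 0 (pb11 ?Q) (pb12 ?Q) (pb21 ?Q) (pb22 ?Q) (g1/sg) 0 (1 - g1/sg) 0 0"
      apply (rule prm_fix)
      apply (simp_all add: Let_def field_simps power2_eq_square sg d1)
      apply ((insert True D_def s2_def, algebra)+)?
      done
    show ?thesis by (rule cstep[OF e _ _ _ A2aL]) (simp_all add: sg)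
  next
    case False
    let ?Q = "tr (Prm 0 1 (-1) 0 b11 b12 b21 b22 g1 g2 d1 d2 0) g2 (-s2) (-g1) sg 0 0 (-D) 0 (D^2)"
    have e: "?Q = Prm 0 1 (-1) 0 (pb11 ?Q) (pb12 ?Q) (pb21 ?Q) (pb22 ?Q) 0 1 1 (-1) 0"
      apply (rule prm_fix)
      apply (simp_all add: Let_def field_simps power2_eq_square False d1)
      apply ((insert D_def s2_def, algebra)+)?
      done
    have det: "g2 * sg - - s2 * - g1 \<noteq> 0" using False unfolding D_def by (simp add: algebra_simps)
    show ?thesis by (rule cstep[OF e det _ _ A2bL]) (simp_all add: False)
  qed
qed

lemma A2: assumes nl: "\<not> Leib (Sh (Prm 0 1 (-1) 0 b11 b12 b21 b22 g1 g2 d1 d2 0))"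
  shows "concl (Sh (Prm 0 1 (-1) 0 b11 b12 b21 b22 g1 g2 d1 d2 0))"
proof (cases "g1 + d1 = 0")
  case False thus ?thesis by (rule A2s)
next
  case True
  have s2: "g2 + d2 \<noteq> 0"
  proof
    assume "g2 + d2 = 0"
    hence "d1 = -g1" "d2 = -g2" using True by (simp_all add: eq_neg_iff_add_eq_0 add.commute)
    thus False using nl Leib_A2 by simp
  qed
  have e: "tr (Prm 0 1 (-1) 0 b11 b12 b21 b22 g1 g2 d1 d2 0) 0 1 1 0 0 0 (-1) 0 1
     = Prm 0 1 (-1) 0 b22 b21 b12 b11 (-g2) (-g1) (-d2) (-d1) 0"
    by (simp add: Let_def)
  have s2': "- g2 + - d2 \<noteq> 0" using s2 by auto
  show ?thesis by (rule cstep[OF e _ _ _ A2s[OF s2']]) simp_all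
qed


lemma A1g: "concl (Sh (Prm 0 1 (-1) 0 b11 b12 b21 b22 1 0 (-1) 0 1))"
proof (cases "b22 = 0")
  case False
  define p where "p = csqrt b22"
  have p0: "p \<noteq> 0" using False unfolding p_def by simp
  have pp: "b22 = p^2" unfolding p_def by simp
  define r where "r = -(b12+b21)/(2*p)"
  let ?Q = "tr (Prm 0 1 (-1) 0 b11 b12 b21 b22 1 0 (-1) 0 1) p 0 r 1 0 0 p (p*b12 + r*p^2) (p^2)"
  have e: "?Q = Prm 0 1 (-1) 0 (pb11 ?Q) 0 0 1 1 0 (-1) 0 1"
    by (rule prm_fix) (simp_all add: Let_def field_simps power2_eq_square p0 pp r_def)
  show ?thesis by (rule cstep[OF e _ _ _ c12]) (simp_all add: p0)
next
  case True
  show ?thesis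
  proof (cases "b12 + b21 = 0")
    case False
    define p where "p = b12 + b21"
    have p0: "p \<noteq> 0" using False unfolding p_def .
    have b21: "b21 = p - b12" unfolding p_def by simp
    let ?Q = "tr (Prm 0 1 (-1) 0 b11 b12 b21 b22 1 0 (-1) 0 1) p 0 (-b11) 1 0 0 p (-p*b21) (p^2)"
    have e: "?Q = Prm 0 1 (-1) 0 0 1 0 0 1 0 (-1) 0 1"
      by (rule prm_fix) (simp_all add: Let_def field_simps power2_eq_square p0 b21 True)
    show ?thesis by (rule cstep[OF e _ _ _ c11]) (simp_all add: p0)
  next
    case True2: True
    have b21: "b21 = -b12" using True2 by (simp add: eq_neg_iff_add_eq_0 add.commute)
    have e: "tr (Prm 0 1 (-1) 0 b11 b12 b21 b22 1 0 (-1) 0 1) 1 0 0 1 0 0 1 b12 1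
      = Prm 0 1 (-1) 0 b11 0 0 0 1 0 (-1) 0 1"
      by (simp add: Let_def True b21)
    show ?thesis by (rule cstep[OF e _ _ _ c10]) simp_all
  qed
qed

lemma A1z1: assumes b11: "b11 \<noteq> 0"
  shows "concl (Sh (Prm 0 1 (-1) 0 b11 b12 b21 b22 0 0 0 0 1))"
proof -
  define s where "s = b12 + b21"
  have b21: "b21 = s - b12" unfolding s_def by simp
  define \<Delta> where "\<Delta> = s^2 - 4*b11*b22"
  show ?thesis
  proof (cases "\<Delta> = 0")
    case True
    define y where "y = csqrt b11"
    have y0: "y \<noteq> 0" using b11 unfolding y_def by simp
    have yy: "b11 = y^2" unfolding y_def by simp
    have b22: "b22 = s^2 / (4*y^2)" using True y0 unfolding \<Delta>_def yy by (simp add: field_simps)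
    define ee where "ee = -s/(2*y)"
    let ?Q = "tr (Prm 0 1 (-1) 0 b11 b12 b21 b22 0 0 0 0 1) 1 ee 0 y 0 0 y (-(b11*ee + b21*y)) (y^2)"
    have e: "?Q = Prm 0 1 (-1) 0 1 0 0 0 0 0 0 0 1"
      by (rule prm_fix) (simp_all add: Let_def field_simps power2_eq_square y0 yy b22 ee_def b21)
    show ?thesis by (rule cstep[OF e _ _ _ c09]) (simp_all add: y0)
  next
    case False
    define sq where "sq = csqrt \<Delta>"
    have sq0: "sq \<noteq> 0" using False unfolding sq_def by simp
    have sqq: "sq^2 = \<Delta>" unfolding sq_def by simp
    define u where "u = (-s + sq)/(2*b11)"
    define w where "w = (-s - sq)/(2*b11)"
    have hu: "b11*(u+w) = -s" unfolding u_def w_def using b11 by (simp add: field_simps)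
    have hw: "b11*u*w = b22"
    proof -
      have "4*b11*(b11*u*w) = (-s+sq)*(-s-sq)" unfolding u_def w_def using b11 by (simp add: field_simps)
      also have "\<dots> = s^2 - sq^2" by (simp add: algebra_simps power2_eq_square)
      also have "\<dots> = 4*b11*b22" unfolding sqq \<Delta>_def by simp
      finally show ?thesis using b11 by simp
    qed
    have hd: "b11*(u-w) = sq" unfolding u_def w_def using b11 by (simp add: field_simps)
    define dd where "dd = u * (- b11) - (- b11 * w) * 1"
    have dd0: "dd \<noteq> 0" using hd sq0 unfolding dd_def by (simp add: algebra_simps)
    define k where "k = -(b11 * (-b11*w) * u + b12 * (-b11*w) * 1 + b21 * (-b11) * u + b22 * (-b11) * 1)"
    let ?Q = "tr (Prm 0 1 (-1) 0 b11 b12 b21 b22 0 0 0 0 1) u (-b11*w) 1 (-b11) 0 0 dd k (dd^2)"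
    have e: "?Q = Prm 0 1 (-1) 0 0 1 0 0 0 0 0 0 1"
      apply (rule prm_fix)
      apply (simp_all add: Let_def field_simps power2_eq_square dd0)
      apply ((insert hu hw dd_def k_def s_def, algebra)+)?
      done
    have wu: "w \<noteq> u" using hd sq0 by auto
    show ?thesis by (rule cstep[OF e _ dd0 _ c08]) (simp_all add: dd0 b11 wu)
  qed
qed

lemma A1z: "concl (Sh (Prm 0 1 (-1) 0 b11 b12 b21 b22 0 0 0 0 1))"
proof (cases "b11 = 0")
  case False thus ?thesis by (rule A1z1)
next
  case True
  show ?thesis
  proof (cases "b22 = 0")
    case False
    have e: "tr (Prm 0 1 (-1) 0 b11 b12 b21 b22 0 0 0 0 1) 0 1 1 0 0 0 (-1) 0 1
       = Prm 0 1 (-1) 0 b22 b21 b12 b11 0 0 0 0 1" by (simp add: Let_def)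
    show ?thesis by (rule cstep[OF e _ _ _ A1z1[OF False]]) simp_all
  next
    case True2: True
    show ?thesis
    proof (cases "b12 + b21 = 0")
      case False
      let ?Q = "tr (Prm 0 1 (-1) 0 b11 b12 b21 b22 0 0 0 0 1) 1 0 1 1 0 0 1 0 1"
      have e: "?Q = Prm 0 1 (-1) 0 (pb11 ?Q) (pb12 ?Q) (pb21 ?Q) (pb22 ?Q) 0 0 0 0 1"
        by (rule prm_fix) (simp_all add: Let_def)
      have p: "pb11 ?Q \<noteq> 0" using False True True2 by (simp add: Let_def)
      show ?thesis by (rule cstep[OF e _ _ _ A1z1[OF p]]) simp_all
    next
      case True3: True
      have b21: "b21 = -b12" using True3 by (simp add: eq_neg_iff_add_eq_0 add.commute)
      have e: "tr (Prm 0 1 (-1) 0 b11 b12 b21 b22 0 0 0 0 1) 1 0 0 1 0 0 1 b12 1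
        = Prm 0 1 (-1) 0 0 0 0 0 0 0 0 0 1"
        by (simp add: Let_def True True2 b21)
      show ?thesis by (rule cstep[OF e _ _ _ c07]) simp_all
    qed
  qed
qed

lemma A1n1: assumes g1: "g1 \<noteq> 0"
  shows "concl (Sh (Prm 0 1 (-1) 0 b11 b12 b21 b22 g1 g2 (-g1) (-g2) 1))"
proof -
  let ?Q = "tr (Prm 0 1 (-1) 0 b11 b12 b21 b22 g1 g2 (-g1) (-g2) 1) 1 (-g2) 0 g1 0 0 g1 0 (g1^2)"
  have e: "?Q = Prm 0 1 (-1) 0 (pb11 ?Q) (pb12 ?Q) (pb21 ?Q) (pb22 ?Q) 1 0 (-1) 0 1"
    by (rule prm_fix) (simp_all add: Let_def field_simps power2_eq_square g1)
  show ?thesis by (rule cstep[OF e _ _ _ A1g]) (simp_all add: g1)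
qed

lemma A1n: "concl (Sh (Prm 0 1 (-1) 0 b11 b12 b21 b22 g1 g2 (-g1) (-g2) 1))"
proof (cases "g1 = 0")
  case False thus ?thesis by (rule A1n1)
next
  case True
  show ?thesis
  proof (cases "g2 = 0")
    case True2: True
    show ?thesis using A1z True True2 by simp
  next
    case False
    have e: "tr (Prm 0 1 (-1) 0 b11 b12 b21 b22 g1 g2 (-g1) (-g2) 1) 0 1 1 0 0 0 (-1) 0 1
       = Prm 0 1 (-1) 0 b22 b21 b12 b11 (-g2) 0 (- (-g2)) (-0) 1" by (simp add: Let_def True)
    have "- g2 \<noteq> 0" using False by simp
    show ?thesis by (rule cstep[OF e _ _ _ A1n1[OF \<open>- g2 \<noteq> 0\<close>]]) simp_all
  qed
qed

lemma AJ: assumes nl: "\<not> Leib (Sh (Prm 0 1 (-1) 0 b11 b12 b21 b22 g1 g2 d1 d2 f))"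
  shows "concl (Sh (Prm 0 1 (-1) 0 b11 b12 b21 b22 g1 g2 d1 d2 f))"
proof (cases "f = 0")
  case True thus ?thesis using A2 nl by simp
next
  case False
  let ?Q = "tr (Prm 0 1 (-1) 0 b11 b12 b21 b22 g1 g2 d1 d2 f) 1 0 0 1 (-(g1+d1)/(2*f)) (-(g2+d2)/(2*f)) 1 0 f"
  have e: "?Q = Prm 0 1 (-1) 0 (pb11 ?Q) (pb12 ?Q) (pb21 ?Q) (pb22 ?Q) (pg1 ?Q) (pg2 ?Q) (- pg1 ?Q) (- pg2 ?Q) 1"
    by (rule prm_fix) (simp_all add: Let_def field_simps False)
  show ?thesis by (rule cstep[OF e _ _ _ A1n]) (simp_all add: False)
qed

lemma Aentry: assumes nl: "\<not> Leib (Sh (Prm 0 a12 (-a12) 0 b11 b12 b21 b22 g1 g2 d1 d2 f))"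
  shows "concl (Sh (Prm 0 a12 (-a12) 0 b11 b12 b21 b22 g1 g2 d1 d2 f))"
proof (cases "a12 = 0")
  case True thus ?thesis using nl Leib_A0 by simp
next
  case False
  have e: "tr (Prm 0 a12 (-a12) 0 b11 b12 b21 b22 g1 g2 d1 d2 f) 1 0 0 1 0 0 a12 0 1
     = Prm 0 1 (-1) 0 b11 b12 b21 b22 (a12*g1) (a12*g2) (a12*d1) (a12*d2) (f*a12^2)"
    using False by (simp add: Let_def field_simps)
  have nl2: "\<not> Leib (Sh (Prm 0 1 (-1) 0 b11 b12 b21 b22 (a12*g1) (a12*g2) (a12*d1) (a12*d2) (f*a12^2)))"
    by (rule nstep[OF e _ False _ nl]) simp_all
  show ?thesis by (rule cstep[OF e _ False _ AJ[OF nl2]]) simp_all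
qed

lemma classify:
  assumes nl: "\<not> Leib (Sh (Prm a11 a12 a21 a22 b11 b12 b21 b22 g1 g2 d1 d2 f))"
  and mono: "a11 \<noteq> 0 \<or> a12 + a21 \<noteq> 0 \<or> a22 \<noteq> 0 \<Longrightarrow> f = 0 \<and> g1 = 0 \<and> g2 = 0"
  shows "concl (Sh (Prm a11 a12 a21 a22 b11 b12 b21 b22 g1 g2 d1 d2 f))"
proof (cases "a11 \<noteq> 0 \<or> a12 + a21 \<noteq> 0 \<or> a22 \<noteq> 0")
  case True
  thus ?thesis using mono[OF True] Ball nl by simp
next
  case False
  hence "a11 = 0" "a22 = 0" "a21 = -a12" by (auto simp: eq_neg_iff_add_eq_0 add.commute)
  thus ?thesis using Aentry nl by simp
qed




declare v4_ops(4)[simp del]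

lemma cbilD: assumes "cbilinear L"
  shows "L (x+y) z = L x z + L y z" "L x (y+z) = L x y + L x z"
    "L (c *s x) y = c *s L x y" "L x (c *s y) = c *s L x y" "L 0 y = 0" "L x 0 = 0"
    "clin (\<lambda>x. L x y)" "clin (L x)"
proof -
  have a: "clin (\<lambda>x. L x y)" for y using assms unfolding cbilinear_def by blast
  have b: "clin (L x)" for x using assms unfolding cbilinear_def by (simp add: eta_contract_eq)
  show "L (x+y) z = L x z + L y z" using clinD(1)[OF a[of z]] by simp
  show "L x (y+z) = L x y + L x z" using clinD(1)[OF b[of x]] by simp
  show "L (c *s x) y = c *s L x y" using clinD(2)[OF a[of y]] by simp
  show "L x (c *s y) = c *s L x y" using clinD(2)[OF b[of x]] by simp
  show "L 0 y = 0" using clin_0[OF a[of y]] by simp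
  show "L x 0 = 0" using clin_0[OF b[of x]] by simp
  show "clin (\<lambda>x. L x y)" by (rule a)
  show "clin (L x)" by (rule b)
qed

lemma is_prod_ge1: "is_prod L m p \<Longrightarrow> 1 \<le> m"
  by (induction rule: is_prod.induct) auto

lemma is_prod_collapse: "is_prod L N p \<Longrightarrow> 1 \<le> k \<Longrightarrow> k \<le> N \<Longrightarrow> is_prod L k p"
proof (induction arbitrary: k rule: is_prod.induct)
  case (single x)
  hence k: "k = 1" by simp
  show ?case unfolding k by (rule is_prod.single)
next
  case (mult i a j b)
  show ?case
  proof (cases "k = 1")
    case True show ?thesis unfolding True by (rule is_prod.single)
  next
    case False
    have i1: "1 \<le> i" "1 \<le> j" using mult.hyps is_prod_ge1 by blast+
    define k1 where "k1 = min i (k - 1)"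
    define k2 where "k2 = k - k1"
    have "1 \<le> k1" "k1 \<le> i" "1 \<le> k2" "k2 \<le> j" "k1 + k2 = k"
      using False mult.prems i1 unfolding k1_def k2_def by auto
    thus ?thesis using mult.IH is_prod.mult by metis
  qed
qed

definition Pn :: "alg4 \<Rightarrow> nat \<Rightarrow> vec4 set" where
  "Pn L k = vec.span {p. \<exists>m\<ge>k. is_prod L m p}"

lemma Pn_mult: assumes "cbilinear L" "q \<in> Pn L k"
  shows "L x q \<in> Pn L (Suc k)" "L q x \<in> Pn L (Suc k)"
proof -
  let ?S = "{p. \<exists>m\<ge>k. is_prod L m p}"
  let ?S' = "{p. \<exists>m\<ge>Suc k. is_prod L m p}"
  have l1: "Vector_Spaces.linear (*s) (*s) (L x)" using cbilD(8)[OF assms(1)] unfolding clin_def .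
  have l2: "Vector_Spaces.linear (*s) (*s) (\<lambda>q. L q x)" using cbilD(7)[OF assms(1)] unfolding clin_def .
  have s1: "L x ` ?S \<subseteq> ?S'"
  proof
    fix z assume "z \<in> L x ` ?S"
    then obtain p m where "z = L x p" "m \<ge> k" "is_prod L m p" by blast
    hence "is_prod L (1 + m) z" using is_prod.mult is_prod.single by blast
    thus "z \<in> ?S'" using \<open>m \<ge> k\<close> by force
  qed
  have s2: "(\<lambda>q. L q x) ` ?S \<subseteq> ?S'"
  proof
    fix z assume "z \<in> (\<lambda>q. L q x) ` ?S"
    then obtain p m where "z = L p x" "m \<ge> k" "is_prod L m p" by blast
    hence "is_prod L (m + 1) z" using is_prod.mult is_prod.single by blast
    thus "z \<in> ?S'" using \<open>m \<ge> k\<close> by force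
  qed
  have "L x q \<in> L x ` vec.span ?S" using assms(2) unfolding Pn_def by blast
  also have "\<dots> = vec.span (L x ` ?S)" using vec.linear_span_image[OF l1] by simp
  also have "\<dots> \<subseteq> vec.span ?S'" by (rule vec.span_mono[OF s1])
  finally show "L x q \<in> Pn L (Suc k)" unfolding Pn_def .
  have "L q x \<in> (\<lambda>q. L q x) ` vec.span ?S" using assms(2) unfolding Pn_def by blast
  also have "\<dots> = vec.span ((\<lambda>q. L q x) ` ?S)" using vec.linear_span_image[OF l2] by simp
  also have "\<dots> \<subseteq> vec.span ?S'" by (rule vec.span_mono[OF s2])
  finally show "L q x \<in> Pn L (Suc k)" unfolding Pn_def .
qed

lemma Pn_subspace: "vec.subspace (Pn L k)" unfolding Pn_def by simp

lemma Pn_anti: "k \<le> k' \<Longrightarrow> Pn L k' \<subseteq> Pn L k"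
  unfolding Pn_def by (rule vec.span_mono) (blast intro: le_trans)

lemma Pn_nil: assumes "nilpotent_alg L" shows "\<exists>n\<ge>2. Pn L n \<subseteq> {0}"
proof -
  obtain n where n: "n > 0" "\<forall>p. is_prod L n p \<longrightarrow> p = 0" using assms unfolding nilpotent_alg_def by blast
  define n' where "n' = max n 2"
  have "{p. \<exists>m\<ge>n'. is_prod L m p} \<subseteq> {0}"
  proof
    fix p assume "p \<in> {p. \<exists>m\<ge>n'. is_prod L m p}"
    then obtain m where "m \<ge> n'" "is_prod L m p" by blast
    hence "is_prod L n p" using is_prod_collapse[of L m p n] n(1) unfolding n'_def by simp
    thus "p \<in> {0}" using n(2) by simp
  qed
  hence "Pn L n' \<subseteq> vec.span {0}" unfolding Pn_def by (rule vec.span_mono)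
  hence "Pn L n' \<subseteq> {0}" by simp
  thus ?thesis unfolding n'_def by (intro exI[of _ "max n 2"]) simp
qed

lemma prod_Pn2: "L x y \<in> Pn L 2"
proof -
  have "is_prod L (1+1) (L x y)" using is_prod.mult is_prod.single by blast
  hence "is_prod L 2 (L x y)" unfolding one_add_one .
  thus ?thesis unfolding Pn_def by (intro vec.span_base CollectI exI[of _ 2]) simp
qed

definition GG :: "alg4 \<Rightarrow> vec4 set \<Rightarrow> vec4 set" where
  "GG L U = {z. \<exists>x u. u \<in> U \<and> (z = L x u \<or> z = L u x)}"

lemma N2: assumes "cbilinear L" "nilpotent_alg L" "U \<subseteq> Pn L 2" "U \<subseteq> vec.span (GG L U)"
  shows "U \<subseteq> {0}"
proof -
  have "U \<subseteq> Pn L k" if "k \<ge> 2" for k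
    using that
  proof (induction k rule: nat_induct_at_least)
    case base thus ?case using assms(3) .
  next
    case (Suc k)
    have "GG L U \<subseteq> Pn L (Suc k)" unfolding GG_def using Pn_mult[OF assms(1)] Suc.IH by blast
    hence "vec.span (GG L U) \<subseteq> Pn L (Suc k)"
      using vec.span_minimal Pn_subspace by blast
    thus ?case using assms(4) by blast
  qed
  moreover obtain n where "n \<ge> 2" "Pn L n \<subseteq> {0}" using Pn_nil[OF assms(2)] by blast
  ultimately show ?thesis by blast
qed

lemma gen_props:
  shows "vec.subspace (gen_subalg m S)" "S \<subseteq> gen_subalg m S"
    "x \<in> gen_subalg m S \<Longrightarrow> y \<in> gen_subalg m S \<Longrightarrow> m x y \<in> gen_subalg m S"
proof -
  show "vec.subspace (gen_subalg m S)" unfolding gen_subalg_def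
    by (rule vec.subspace_Inter) blast
  show "S \<subseteq> gen_subalg m S" unfolding gen_subalg_def by blast
  show "x \<in> gen_subalg m S \<Longrightarrow> y \<in> gen_subalg m S \<Longrightarrow> m x y \<in> gen_subalg m S"
    unfolding gen_subalg_def by blast
qed

lemma generation: assumes "cbilinear L" "nilpotent_alg L"
  "vec.span (insert x (vec.span {z. \<exists>a b. z = L a b})) = UNIV"
  shows "gen_subalg L {x} = UNIV"
proof -
  let ?B = "gen_subalg L {x}"
  let ?D = "vec.span {z. \<exists>a b. z = L a b}"
  let ?Sum = "\<lambda>k. {b + q |b q. b \<in> ?B \<and> q \<in> Pn L k}"
  have sub: "vec.subspace (?Sum k)" for k
    by (rule vec.subspace_sums[OF gen_props(1) Pn_subspace])
  have xB: "x \<in> ?B" using gen_props(2) by blast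
  have key: "UNIV \<subseteq> ?Sum k" if "k \<ge> 2" for k
    using that
  proof (induction k rule: nat_induct_at_least)
    case base
    have "insert x ?D \<subseteq> ?Sum 2"
    proof
      fix z assume "z \<in> insert x ?D"
      moreover have "?D \<subseteq> Pn L 2"
      proof -
        have "{z. \<exists>a b. z = L a b} \<subseteq> Pn L 2" using prod_Pn2 by blast
        thus ?thesis using vec.span_minimal[OF _ Pn_subspace] by blast
      qed
      moreover have "0 \<in> Pn L 2" by (simp add: Pn_def vec.span_zero)
      moreover have "0 \<in> ?B" using vec.subspace_0[OF gen_props(1)] .
      ultimately show "z \<in> ?Sum 2" using xB by force
    qed
    hence "vec.span (insert x ?D) \<subseteq> ?Sum 2" using vec.span_minimal sub by blast
    thus ?case using assms(3) by simp
  next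
    case (Suc k)
    have "{z. \<exists>a b. z = L a b} \<subseteq> ?Sum (Suc k)"
    proof
      fix z assume "z \<in> {z. \<exists>a b. z = L a b}"
      then obtain a b where z: "z = L a b" by blast
      obtain b1 q1 where 1: "a = b1 + q1" "b1 \<in> ?B" "q1 \<in> Pn L k" using Suc.IH by blast
      obtain b2 q2 where 2: "b = b2 + q2" "b2 \<in> ?B" "q2 \<in> Pn L k" using Suc.IH by blast
      have "z = L b1 b2 + (L b1 q2 + L q1 b2 + L q1 q2)"
        unfolding z 1(1) 2(1) using cbilD[OF assms(1)] by (simp add: algebra_simps)
      moreover have "L b1 b2 \<in> ?B" using gen_props(3) 1(2) 2(2) by blast
      moreover have "L b1 q2 + L q1 b2 + L q1 q2 \<in> Pn L (Suc k)"
        using Pn_mult[OF assms(1)] 1(3) 2(3) vec.subspace_add[OF Pn_subspace] by metis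
      ultimately show "z \<in> ?Sum (Suc k)" by blast
    qed
    hence "?D \<subseteq> ?Sum (Suc k)" using vec.span_minimal sub by blast
    moreover have "x \<in> ?Sum (Suc k)"
    proof -
      have "0 \<in> Pn L (Suc k)" by (simp add: Pn_def vec.span_zero)
      thus ?thesis using xB by force
    qed
    ultimately have "insert x ?D \<subseteq> ?Sum (Suc k)" by blast
    hence "vec.span (insert x ?D) \<subseteq> ?Sum (Suc k)" using vec.span_minimal[OF _ sub] by blast
    thus ?case using assms(3) by simp
  qed
  obtain n where n: "n \<ge> 2" "Pn L n \<subseteq> {0}" using Pn_nil[OF assms(2)] by blast
  have "UNIV \<subseteq> ?B"
  proof
    fix z :: vec4
    obtain b q where "z = b + q" "b \<in> ?B" "q \<in> Pn L n" using key[OF n(1)] by blast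
    thus "z \<in> ?B" using n(2) by auto
  qed
  thus ?thesis by blast
qed


lemma axis_v4: "axis 1 (1::complex) = (v4 1 0 0 0 :: vec4)" "axis 2 (1::complex) = (v4 0 1 0 0 :: vec4)"
  "axis 3 (1::complex) = (v4 0 0 1 0 :: vec4)" "axis 4 (1::complex) = (v4 0 0 0 1 :: vec4)"
  by (simp_all add: vec4_eq axis_def)

lemma vec4_dec: "(a::vec4) = a$1 *s v4 1 0 0 0 + a$2 *s v4 0 1 0 0 + a$3 *s v4 0 0 1 0 + a$4 *s v4 0 0 0 1"
  by (simp add: vec4_eq)

lemma bil_ext:
  fixes F G :: alg4
  assumes F1: "\<And>x y z. F (x+y) z = F x z + F y z" and F2: "\<And>x y z. F x (y+z) = F x y + F x z"
    and F3: "\<And>c x y. F (c *s x) y = c *s F x y" and F4: "\<And>c x y. F x (c *s y) = c *s F x y"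
    and G1: "\<And>x y z. G (x+y) z = G x z + G y z" and G2: "\<And>x y z. G x (y+z) = G x y + G x z"
    and G3: "\<And>c x y. G (c *s x) y = c *s G x y" and G4: "\<And>c x y. G x (c *s y) = c *s G x y"
    and H: "\<And>x y. x \<in> {v4 1 0 0 0, v4 0 1 0 0, v4 0 0 1 0, v4 0 0 0 1} \<Longrightarrow>
       y \<in> {v4 1 0 0 0, v4 0 1 0 0, v4 0 0 1 0, v4 0 0 0 1} \<Longrightarrow> F x y = G x y"
  shows "F a b = G a b"
proof -
  define A where "A = a$1 *s v4 1 0 0 0 + a$2 *s v4 0 1 0 0 + a$3 *s v4 0 0 1 0 + a$4 *s (v4 0 0 0 1 :: vec4)"
  define B where "B = b$1 *s v4 1 0 0 0 + b$2 *s v4 0 1 0 0 + b$3 *s v4 0 0 1 0 + b$4 *s (v4 0 0 0 1 :: vec4)"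
  have "a = A" "b = B" unfolding A_def B_def using vec4_dec by blast+
  have h: "F (v4 i1 i2 i3 i4) (v4 j1 j2 j3 j4) = G (v4 i1 i2 i3 i4) (v4 j1 j2 j3 j4)"
    if "v4 i1 i2 i3 i4 \<in> {v4 1 0 0 0, v4 0 1 0 0, v4 0 0 1 0, v4 0 0 0 1}"
       "v4 j1 j2 j3 j4 \<in> {v4 1 0 0 0, v4 0 1 0 0, v4 0 0 1 0, v4 0 0 0 1}" for i1 i2 i3 i4 j1 j2 j3 j4
    using H that by blast
  have "F A B = G A B" unfolding A_def B_def
    by (simp only: F1 F2 F3 F4 G1 G2 G3 G4 H insert_iff singleton_iff simp_thms)
  thus ?thesis using \<open>a = A\<close> \<open>b = B\<close> by simp
qed

lemma Sh_bil: "Sh P (x+y) z = Sh P x z + Sh P y z" "Sh P x (y+z) = Sh P x y + Sh P x z"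
  "Sh P (c *s x) y = c *s Sh P x y" "Sh P x (c *s y) = c *s Sh P x y"
  by (cases P; simp add: vec4_eq algebra_simps)+

lemma in_span2: assumes "z \<in> vec.span {a, b}" shows "\<exists>s t. z = s *s a + t *s b"
proof -
  obtain s where "z - s *s a \<in> vec.span {b}" using assms unfolding vec.span_insert by blast
  then obtain t where "z - s *s a = t *s b" unfolding vec.span_singleton by blast
  hence "z = s *s a + t *s b" by (simp add: algebra_simps)
  thus ?thesis by blast
qed

lemma in_span1: assumes "z \<in> vec.span {b}" shows "\<exists>t. z = t *s b"
  using assms unfolding vec.span_singleton by blast

lemma dim4: "vec.dim (UNIV :: vec4 set) = 4"
  by (simp add: card_cart_basis)

lemma Leib_leib: "Leib L \<longleftrightarrow> leibniz_on L UNIV"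
  unfolding Leib_def leibniz_on_def by blast

lemma leib_binary: "leibniz_on L UNIV \<Longrightarrow> binary_leibniz L"
  unfolding binary_leibniz_def leibniz_on_def by blast

lemma mono_id: assumes "mono_leibniz L" shows "L x (L x x) = 0"
proof -
  have "x \<in> gen_subalg L {x}" using gen_props(2) by blast
  moreover have "L x x \<in> gen_subalg L {x}" using gen_props(3) calculation by blast
  ultimately have "L (L x x) x = L (L x x) x + L x (L x x)"
    using assms unfolding mono_leibniz_def leibniz_on_def by blast
  thus ?thesis by simp
qed


lemma struct_thm:
  assumes bil: "cbilinear L" and nil: "nilpotent_alg L" and mono: "mono_leibniz L"
    and nl: "\<not> leibniz_on L UNIV"
  shows "\<exists>P. siso L (Sh P) \<and> (\<forall>a. Sh P a (Sh P a a) = 0)"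
proof -
  note Lb = cbilD[OF bil]
  define prods where "prods = {z. \<exists>a b. z = L a b}"
  define D where "D = vec.span prods"
  define W where "W = vec.span (GG L D)"
  define W' where "W' = vec.span (GG L W)"
  have LD: "L x y \<in> D" for x y unfolding D_def prods_def by (rule vec.span_base) blast
  have GD: "GG L D \<subseteq> D" unfolding GG_def using LD by blast
  have WD: "W \<subseteq> D" unfolding W_def D_def using vec.span_minimal[OF GD[unfolded D_def]] by simp
  have DP: "D \<subseteq> Pn L 2"
  proof -
    have "prods \<subseteq> Pn L 2" unfolding prods_def using prod_Pn2 by blast
    thus ?thesis unfolding D_def using vec.span_minimal[OF _ Pn_subspace] by blast
  qed
  have LW: "L x d \<in> W" "L d x \<in> W" if "d \<in> D" for x d
    unfolding W_def using that by (auto intro!: vec.span_base simp: GG_def)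
  have W0: "\<not> W \<subseteq> {0}"
  proof
    assume W0: "W \<subseteq> {0}"
    have "leibniz_on L UNIV" unfolding leibniz_on_def
    proof (intro ballI)
      fix x y z :: vec4
      have "L (L x y) z = 0" "L (L x z) y = 0" "L x (L y z) = 0" using LW LD W0 by blast+
      thus "L (L x y) z = L (L x z) y + L x (L y z)" by simp
    qed
    thus False using nl by blast
  qed
  have DW: "\<not> D \<subseteq> W"
  proof
    assume "D \<subseteq> W"
    hence "D \<subseteq> {0}" using N2[OF bil nil DP] unfolding W_def by blast
    thus False using W0 WD by blast
  qed
  have GW: "GG L W \<subseteq> W" unfolding GG_def using LW WD by blast
  have W'W: "W' \<subseteq> W" unfolding W'_def W_def using vec.span_minimal[OF GW[unfolded W_def]] by simp
  have WW': "\<not> W \<subseteq> W'"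
  proof
    assume "W \<subseteq> W'"
    hence "W \<subseteq> {0}" using N2[OF bil nil _, of W] WD DP unfolding W'_def by blast
    thus False using W0 by blast
  qed
  have dimlt: "vec.dim W < vec.dim D"
  proof -
    have "vec.span (GG L D) \<subset> vec.span prods" using WD DW unfolding W_def D_def by blast
    hence "vec.dim (GG L D) < vec.dim prods" by (rule vec.dim_psubset)
    thus ?thesis unfolding W_def D_def by simp
  qed
  have dimW: "vec.dim W \<ge> 1" using W0 vec.dim_eq_0[of W] by linarith
  have dimD: "vec.dim D \<le> 4" using vec.dim_subset[of D UNIV] dim4 by simp
  show ?thesis
  proof (cases "vec.dim D \<ge> 3")
    case True
    obtain x where x: "vec.span (insert x D) = UNIV"
    proof (cases "vec.dim D = 4")
      case True4: True
      have "vec.span D = UNIV" using vec.dim_eq_span[of D UNIV] True4 dim4 by simp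
      thus ?thesis using that[of 0] by (simp add: vec.span_insert_0)
    next
      case False
      have "D \<noteq> UNIV" using False dim4 by auto
      then obtain x where "x \<notin> D" by blast
      hence "x \<notin> vec.span D" unfolding D_def by (simp add: vec.span_span)
      hence "vec.dim (insert x D) = 4" using vec.dim_insert[of x D] False True dimD by simp
      hence "vec.span (insert x D) = UNIV" using vec.dim_eq_span[of "insert x D" UNIV] dim4 by simp
      thus ?thesis using that by blast
    qed
    have "gen_subalg L {x} = UNIV" by (rule generation[OF bil nil x[unfolded D_def prods_def]])
    hence "leibniz_on L UNIV" using mono unfolding mono_leibniz_def by metis
    thus ?thesis using nl by blast
  next
    case False
    have dW1: "vec.dim W = 1" and dD2: "vec.dim D = 2" using False dimlt dimW by linarith+
    obtain Bw where Bw: "Bw \<subseteq> W" "vec.independent Bw" "W \<subseteq> vec.span Bw" "card Bw = vec.dim W"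
      using vec.basis_exists by blast
    then obtain w where Bw1: "Bw = {w}" using dW1 card_1_singletonE by metis
    have Wsp: "W = vec.span {w}"
    proof
      show "W \<subseteq> vec.span {w}" using Bw(3) Bw1 by simp
      show "vec.span {w} \<subseteq> W" using Bw(1) Bw1 vec.span_minimal[of "{w}" W] unfolding W_def by simp
    qed
    have w0: "w \<noteq> 0" using Bw(2) Bw1 by simp
    have wW: "w \<in> W" using Bw(1) Bw1 by simp
    have W'0: "z = 0" if zW: "z \<in> W'" for z
    proof -
      obtain c where c: "z = c *s w" using in_span1 zW W'W Wsp by blast
      show ?thesis
      proof (rule ccontr)
        assume "z \<noteq> 0"
        hence "c \<noteq> 0" using c by simp
        hence "w = (1/c) *s z" using c by simp
        hence "w \<in> W'" using zW unfolding W'_def by (simp add: vec.span_scale)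
        hence "vec.span {w} \<subseteq> W'" using vec.span_minimal[of "{w}" W'] unfolding W'_def by simp
        hence "W \<subseteq> W'" using Wsp by simp
        thus False using WW' by blast
      qed
    qed
    have Lw: "L x w = 0" "L w x = 0" for x
      using W'0 wW unfolding W'_def by (auto intro!: vec.span_base simp: GG_def)
    obtain v3 where v3: "v3 \<in> D" "v3 \<notin> W" using DW by blast
    have v3w: "v3 \<noteq> w" using v3 wW by blast
    have ind2: "vec.independent {v3, w}"
      using v3(2) w0 v3w unfolding Wsp by (simp add: vec.independent_insert)
    have spD: "vec.span {v3, w} = D"
    proof -
      have "card {v3, w} = 2" using v3w by simp
      hence "vec.dim {v3, w} = 2" using vec.dim_eq_card_independent[OF ind2] by simp
      moreover have "w \<in> D" using wW WD by blast
      ultimately have "vec.span {v3, w} = vec.span D" using vec.dim_eq_span[of "{v3, w}" D] v3(1) dD2 by simp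
      thus ?thesis unfolding D_def by simp
    qed
    have "\<exists>B. {v3, w} \<subseteq> B \<and> vec.independent B \<and> UNIV \<subseteq> vec.span B"
      by (rule vec.maximal_independent_subset_extend[of "{v3, w}" UNIV]) (use ind2 in auto)
    then obtain B where B: "{v3, w} \<subseteq> B" "vec.independent B" "UNIV \<subseteq> vec.span B" by blast
    have fB: "finite B" using B(2) vec.finiteI_independent by blast
    have cB: "card B = 4"
    proof -
      have "vec.dim (vec.span B) = card B" by (rule vec.dim_span_eq_card_independent[OF B(2)])
      moreover have "vec.span B = UNIV" using B(3) by blast
      ultimately show ?thesis using dim4 by simp
    qed
    have "card (B - {v3, w}) = 2" using cB B(1) fB v3w by (simp add: card_Diff_subset)
    then obtain v1 v2 where v12: "B - {v3, w} = {v1, v2}" "v1 \<noteq> v2" by (meson card_2_iff)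
    have Beq: "B = {v1, v2, v3, w}" using v12 B(1) by blast
    have dist: "v1 \<noteq> v3" "v1 \<noteq> w" "v2 \<noteq> v3" "v2 \<noteq> w" using v12(1) by blast+
    have spB: "vec.span {v1, v2, v3, w} = UNIV" using B(3) Beq by blast
    have inD: "z \<in> D \<Longrightarrow> \<exists>s t. z = s *s v3 + t *s w" for z using in_span2 spD by blast
    have inW: "z \<in> W \<Longrightarrow> \<exists>t. z = t *s w" for z using in_span1 Wsp by blast
    obtain s11 t11 where e11: "L v1 v1 = s11 *s v3 + t11 *s w" using inD[OF LD] by blast
    obtain s12 t12 where e12: "L v1 v2 = s12 *s v3 + t12 *s w" using inD[OF LD] by blast
    obtain s21 t21 where e21: "L v2 v1 = s21 *s v3 + t21 *s w" using inD[OF LD] by blast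
    obtain s22 t22 where e22: "L v2 v2 = s22 *s v3 + t22 *s w" using inD[OF LD] by blast
    obtain c1 where f1: "L v1 v3 = c1 *s w" using inW LW(1)[OF v3(1)] by blast
    obtain c2 where f2: "L v2 v3 = c2 *s w" using inW LW(1)[OF v3(1)] by blast
    obtain d1 where f3: "L v3 v1 = d1 *s w" using inW LW(2)[OF v3(1)] by blast
    obtain d2 where f4: "L v3 v2 = d2 *s w" using inW LW(2)[OF v3(1)] by blast
    obtain ff where f5: "L v3 v3 = ff *s w" using inW LW(1)[OF v3(1)] by blast
    define g where "g a = a$1 *s v1 + a$2 *s v2 + a$3 *s v3 + a$4 *s w" for a :: vec4
    define P where "P = Prm s11 s12 s21 s22 t11 t12 t21 t22 c1 c2 d1 d2 ff"
    have g1: "g (x + y) = g x + g y" for x y unfolding g_def by (simp add: algebra_simps)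
    have g2: "g (c *s x) = c *s g x" for c x unfolding g_def by (simp add: algebra_simps)
    have gcl: "clin g" unfolding clin_iff using g1 g2 by blast
    have gsurj: "surj g"
    proof -
      have "z \<in> range g" for z
      proof -
        have "z \<in> vec.span {v1, v2, v3, w}" using spB by simp
        then obtain u where "z = (\<Sum>v\<in>{v1, v2, v3, w}. u v *s v)"
          using vec.span_finite[of "{v1, v2, v3, w}"] by auto
        hence "z = g (v4 (u v1) (u v2) (u v3) (u w))"
          unfolding g_def using v12(2) dist v3w by simp
        thus ?thesis by blast
      qed
      thus ?thesis by blast
    qed
    have ginj: "inj g" using vec.linear_surj_imp_inj[OF gcl[unfolded clin_def] gsurj] .
    have gbij: "bij g" using ginj gsurj by (simp add: bij_def)
    have gL: "L (g a) (g b) = g (Sh P a b)" for a b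
    proof (rule bil_ext[where F = "\<lambda>a b. L (g a) (g b)" and G = "\<lambda>a b. g (Sh P a b)"])
      fix x y
      assume "x \<in> {v4 1 0 0 0, v4 0 1 0 0, v4 0 0 1 0, v4 0 0 0 1}" "y \<in> {v4 1 0 0 0, v4 0 1 0 0, v4 0 0 1 0, v4 0 0 0 1}"
      thus "L (g x) (g y) = g (Sh P x y)"
        unfolding P_def g_def
        by (elim insertE emptyE; simp add: Lb e11 e12 e21 e22 f1 f2 f3 f4 f5 Lw)
    qed (simp_all add: g1 g2 Lb Sh_bil)
    have "siso L (Sh P)" unfolding siso_def using gcl gbij gL by blast
    moreover have "Sh P a (Sh P a a) = 0" for a
    proof -
      have "g (Sh P a (Sh P a a)) = L (g a) (L (g a) (g a))" using gL by simp
      also have "\<dots> = 0" using mono_id[OF mono] .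
      finally have "g (Sh P a (Sh P a a)) = g 0" using clin_0[OF gcl] by simp
      thus ?thesis using ginj by (simp add: inj_eq)
    qed
    ultimately show ?thesis by blast
  qed
qed


lemma mono_params:
  assumes h: "\<forall>a. Sh (Prm a11 a12 a21 a22 b11 b12 b21 b22 g1 g2 d1 d2 f) a
     (Sh (Prm a11 a12 a21 a22 b11 b12 b21 b22 g1 g2 d1 d2 f) a a) = 0"
    and q: "a11 \<noteq> 0 \<or> a12 + a21 \<noteq> 0 \<or> a22 \<noteq> 0"
  shows "f = 0 \<and> g1 = 0 \<and> g2 = 0"
proof -
  define s where "s = a12 + a21"
  have k: "(a11*x*x + s*x*y + a22*y*y) * (g1*x + g2*y + f*z) = 0" for x y z
  proof -
    have "Sh (Prm a11 a12 a21 a22 b11 b12 b21 b22 g1 g2 d1 d2 f) (v4 x y z 0)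
     (Sh (Prm a11 a12 a21 a22 b11 b12 b21 b22 g1 g2 d1 d2 f) (v4 x y z 0) (v4 x y z 0)) = 0"
      using h by blast
    hence "(Sh (Prm a11 a12 a21 a22 b11 b12 b21 b22 g1 g2 d1 d2 f) (v4 x y z 0)
     (Sh (Prm a11 a12 a21 a22 b11 b12 b21 b22 g1 g2 d1 d2 f) (v4 x y z 0) (v4 x y z 0))) $ 4 = 0"
      by (simp only: zero_index)
    thus ?thesis unfolding s_def by (simp add: algebra_simps)
  qed
  have qf: "(a11*x*x + s*x*y + a22*y*y) * f = 0" for x y
    using k[of x y 1] k[of x y 0] by (simp add: algebra_simps)
  have f0: "f = 0"
  proof (cases "a11 \<noteq> 0")
    case True thus ?thesis using qf[of 1 0] by simp
  next
    case False
    show ?thesis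
    proof (cases "a22 \<noteq> 0")
      case True thus ?thesis using qf[of 0 1] by simp
    next
      case False2: False
      hence "s \<noteq> 0" using q False unfolding s_def by simp
      thus ?thesis using qf[of 1 1] False False2 by simp
    qed
  qed
  have e1: "a11 * g1 = 0" using k[of 1 0 0] by simp
  have e2: "a22 * g2 = 0" using k[of 0 1 0] by simp
  have e3: "(a11 + s + a22) * (g1 + g2) = 0" using k[of 1 1 0] by simp
  have e4: "(a11 - s + a22) * (g1 - g2) = 0" using k[of 1 "-1" 0] by (simp add: algebra_simps)
  have qs: "a11 \<noteq> 0 \<or> s \<noteq> 0 \<or> a22 \<noteq> 0" using q unfolding s_def .
  have g: "g1 = 0 \<and> g2 = 0"
  proof (rule ccontr)
    assume ng: "\<not> (g1 = 0 \<and> g2 = 0)"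
    show False
    proof (cases "g1 = 0")
      case False
      hence a11: "a11 = 0" using e1 by simp
      show False
      proof (cases "g2 = 0")
        case False2: False
        hence a22: "a22 = 0" using e2 by simp
        hence "s \<noteq> 0" using qs a11 by simp
        hence "g1 + g2 = 0" "g1 - g2 = 0" using e3 e4 a11 a22 by simp_all
        hence "g1 = 0" by (simp add: algebra_simps)
        thus False using False by simp
      next
        case True2: True
        hence "s + a22 = 0" "a22 - s = 0" using e3 e4 a11 False by simp_all
        hence "s = 0" "a22 = 0" by (simp_all add: algebra_simps)
        thus False using qs a11 by simp
      qed
    next
      case True
      hence g2: "g2 \<noteq> 0" using ng by simp
      hence a22: "a22 = 0" using e2 by simp
      hence "a11 + s = 0" "a11 - s = 0" using e3 e4 True g2 by simp_all
      hence "s = 0" "a11 = 0" by (simp_all add: algebra_simps)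
      thus False using qs a22 by simp
    qed
  qed
  show ?thesis using f0 g by simp
qed

lemma concl_iso: assumes "concl L"
  shows "isomorphic_alg L M01 \<or> isomorphic_alg L M02
    \<or> (\<exists>\<alpha>. isomorphic_alg L (M03 \<alpha>)) \<or> (\<exists>\<alpha>. isomorphic_alg L (M04 \<alpha>))
    \<or> isomorphic_alg L M05 \<or> isomorphic_alg L M06 \<or> isomorphic_alg L M07
    \<or> isomorphic_alg L M08 \<or> isomorphic_alg L M09
    \<or> (\<exists>\<alpha>. isomorphic_alg L (M10 \<alpha>)) \<or> isomorphic_alg L M11
    \<or> (\<exists>\<alpha>. isomorphic_alg L (M12 \<alpha>)) \<or> (\<exists>\<alpha>. isomorphic_alg L (M13 \<alpha>))
    \<or> (\<exists>\<alpha>. isomorphic_alg L (M14 \<alpha>)) \<or> (\<exists>\<alpha>. isomorphic_alg L (M15 \<alpha>))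
    \<or> (\<exists>\<alpha>. isomorphic_alg L (M16 \<alpha>))
    \<or> (\<exists>\<alpha>. \<alpha> \<noteq> 0 \<and> isomorphic_alg L (M17 \<alpha>))
    \<or> (\<exists>\<alpha>. \<alpha> \<noteq> 0 \<and> isomorphic_alg L (M18 \<alpha>))
    \<or> isomorphic_alg L M19 \<or> isomorphic_alg L M20
    \<or> isomorphic_alg L M21 \<or> isomorphic_alg L M22"
  using assms unfolding concl_def by (elim disjE exE conjE; blast dest: siso_iso)

theorem theoremB:
  fixes L :: alg4
  assumes "cbilinear L" and "nilpotent_alg L" and "mono_leibniz L"
  shows "binary_leibniz L
    \<or> isomorphic_alg L M01 \<or> isomorphic_alg L M02
    \<or> (\<exists>\<alpha>. isomorphic_alg L (M03 \<alpha>)) \<or> (\<exists>\<alpha>. isomorphic_alg L (M04 \<alpha>))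
    \<or> isomorphic_alg L M05 \<or> isomorphic_alg L M06 \<or> isomorphic_alg L M07
    \<or> isomorphic_alg L M08 \<or> isomorphic_alg L M09
    \<or> (\<exists>\<alpha>. isomorphic_alg L (M10 \<alpha>)) \<or> isomorphic_alg L M11
    \<or> (\<exists>\<alpha>. isomorphic_alg L (M12 \<alpha>)) \<or> (\<exists>\<alpha>. isomorphic_alg L (M13 \<alpha>))
    \<or> (\<exists>\<alpha>. isomorphic_alg L (M14 \<alpha>)) \<or> (\<exists>\<alpha>. isomorphic_alg L (M15 \<alpha>))
    \<or> (\<exists>\<alpha>. isomorphic_alg L (M16 \<alpha>))
    \<or> (\<exists>\<alpha>. \<alpha> \<noteq> 0 \<and> isomorphic_alg L (M17 \<alpha>))
    \<or> (\<exists>\<alpha>. \<alpha> \<noteq> 0 \<and> isomorphic_alg L (M18 \<alpha>))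
    \<or> isomorphic_alg L M19 \<or> isomorphic_alg L M20
    \<or> isomorphic_alg L M21 \<or> isomorphic_alg L M22"
proof (cases "leibniz_on L UNIV")
  case True
  thus ?thesis using leib_binary by blast
next
  case False
  obtain P where P: "siso L (Sh P)" "\<forall>a. Sh P a (Sh P a a) = 0"
    using struct_thm[OF assms False] by blast
  obtain a11 a12 a21 a22 b11 b12 b21 b22 g1 g2 d1 d2 f where
    Pe: "P = Prm a11 a12 a21 a22 b11 b12 b21 b22 g1 g2 d1 d2 f" by (cases P) blast
  have nlS: "\<not> Leib (Sh P)"
  proof
    assume "Leib (Sh P)"
    hence "Leib L" using siso_Leib P(1) by blast
    thus False using False Leib_leib by blast
  qed
  have "concl (Sh P)"
    unfolding Pe
    by (rule classify[OF nlS[unfolded Pe]]) (rule mono_params[OF P(2)[unfolded Pe]])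
  hence "concl L" using concl_siso P(1) by blast
  thus ?thesis using concl_iso by blast
qed


end
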